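(* Let $k\ge1$ and let $\phi=(\phi_1,\dots,\phi_k):\mathbb{D}^k\to\overline{\mathbb{D}}^k$ be an analytic map such that $C_\phi f=f\circ\phi$ maps $A^+(\mathbb{T}^k)$ into itself. Then $C_\phi$ is an isometry of $A^+(\mathbb{T}^k)$ if and only if: (a) for each $1\le i\le k$, $\phi_i=\epsilon_iF_i$, where $\epsilon_i$ is a complex number of modulus $1$, $F_i\in A^+(\mathbb{T}^k)$ has all Taylor coefficients $\widehat{F_i}(\beta)\ge0$, and $F_i(e)=\|F_i\|_\infty=1$, where $e=(1,\dots,1)$; and (b) whenever $\alpha,\alpha'\in\mathbb{N}_0^k$ are distinct, the spectra of $\phi^\alpha$ and $\phi^{\alpha'}$ are disjoint.
   Context: $A^+(\mathbb{T}^k)$ is the algebra of functions $f(z)=\sum_{\alpha\in\mathbb{N}_0^k}\widehat f(\alpha)z^\alpha$ on $\overline{\mathbb{D}}^k$ with $\|f\|_{A^+(\mathbb{T}^k)}=\sum|\widehat f(\alpha)|<\infty$, a Banach algebra under pointwise multiplication. The spectrum of $f$ is $\{\alpha:\widehat f(\alpha)\ne0\}$. For $\alpha\in\mathbb{N}_0^k$, $\phi^\alpha=\phi_1^{\alpha_1}\cdots\phi_k^{\alpha_k}$. $\|F\|_\infty=\sup_{z\in\mathbb{D}^k}|F(z)|$. *)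

theory Defs
  imports "HOL-Analysis.Analysis"
begin

text \<open>Points of \<open>\<complex>^k\<close> are functions \<open>'n \<Rightarrow> complex\<close> for a finite index type \<open>'n\<close>
  (so \<open>k = CARD('n) \<ge> 1\<close>); multi-indices are functions \<open>'n \<Rightarrow> nat\<close>.\<close>

definition monom :: "('n::finite \<Rightarrow> nat) \<Rightarrow> ('n \<Rightarrow> complex) \<Rightarrow> complex" where
  "monom \<alpha> z = (\<Prod>i\<in>UNIV. z i ^ \<alpha> i)"

definition polydisc :: "('n::finite \<Rightarrow> complex) set" where
  "polydisc = {z. \<forall>i. norm (z i) < 1}"

definition series_eval :: "(('n::finite \<Rightarrow> nat) \<Rightarrow> complex) \<Rightarrow> ('n \<Rightarrow> complex) \<Rightarrow> complex" where
  "series_eval c z = infsum (\<lambda>\<alpha>. c \<alpha> * monom \<alpha> z) UNIV"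

definition Aplus_rep :: "(('n::finite \<Rightarrow> complex) \<Rightarrow> complex) \<Rightarrow> (('n \<Rightarrow> nat) \<Rightarrow> complex) \<Rightarrow> bool" where
  "Aplus_rep f c \<longleftrightarrow> (\<lambda>\<alpha>. norm (c \<alpha>)) summable_on UNIV \<and> (\<forall>z\<in>polydisc. series_eval c z = f z)"

definition in_Aplus :: "(('n::finite \<Rightarrow> complex) \<Rightarrow> complex) \<Rightarrow> bool" where
  "in_Aplus f \<longleftrightarrow> (\<exists>c. Aplus_rep f c)"

text \<open>Taylor coefficients (unique for elements of \<open>A^+\<close>).\<close>
definition Aplus_coeff :: "(('n::finite \<Rightarrow> complex) \<Rightarrow> complex) \<Rightarrow> ('n \<Rightarrow> nat) \<Rightarrow> complex" where
  "Aplus_coeff f = (THE c. Aplus_rep f c)"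

definition Aplus_norm :: "(('n::finite \<Rightarrow> complex) \<Rightarrow> complex) \<Rightarrow> real" where
  "Aplus_norm f = infsum (\<lambda>\<alpha>. norm (Aplus_coeff f \<alpha>)) UNIV"

definition spectrum_Aplus :: "(('n::finite \<Rightarrow> complex) \<Rightarrow> complex) \<Rightarrow> ('n \<Rightarrow> nat) set" where
  "spectrum_Aplus f = {\<alpha>. Aplus_coeff f \<alpha> \<noteq> 0}"

text \<open>Extension of an element of \<open>A^+\<close> to the closed polydisc (sum of its series).\<close>
definition Aplus_ext :: "(('n::finite \<Rightarrow> complex) \<Rightarrow> complex) \<Rightarrow> ('n \<Rightarrow> complex) \<Rightarrow> complex" where
  "Aplus_ext f z = series_eval (Aplus_coeff f) z"

definition comp_op :: "('n::finite \<Rightarrow> ('n \<Rightarrow> complex) \<Rightarrow> complex) \<Rightarrow> (('n \<Rightarrow> complex) \<Rightarrow> complex)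
    \<Rightarrow> ('n \<Rightarrow> complex) \<Rightarrow> complex" where
  "comp_op \<phi> f = (\<lambda>z. Aplus_ext f (\<lambda>i. \<phi> i z))"

text \<open>Holomorphy on the open polydisc (Osgood: continuous and holomorphic in each variable).\<close>
definition analytic_polydisc :: "(('n::finite \<Rightarrow> complex) \<Rightarrow> complex) \<Rightarrow> bool" where
  "analytic_polydisc f \<longleftrightarrow> continuous_on polydisc f \<and>
     (\<forall>z\<in>polydisc. \<forall>i. (\<lambda>w. f (z(i := w))) field_differentiable at (z i))"

end

theory Submission
  imports Defs
begin

abbreviation asum :: "('a \<Rightarrow> complex) \<Rightarrow> bool" where
  "asum c \<equiv> (\<lambda>x. norm (c x)) summable_on UNIV"

definition cpd :: "('n::finite \<Rightarrow> complex) set" where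
  "cpd = {z. \<forall>i. norm (z i) \<le> 1}"

lemma polydisc_cpd: "z \<in> polydisc \<Longrightarrow> z \<in> cpd"
  by (auto simp: polydisc_def cpd_def less_imp_le)

lemma one_cpd[simp]: "(\<lambda>_. 1) \<in> cpd"
  by (simp add: cpd_def)

lemma monom_zero[simp]: "monom (\<lambda>_. 0) z = 1"
  by (simp add: monom_def)

lemma monom_one[simp]: "monom \<alpha> (\<lambda>_. 1) = 1"
  by (simp add: monom_def)

lemma monom_add: "monom (\<lambda>i. \<alpha> i + \<beta> i) z = monom \<alpha> z * monom \<beta> z"
  by (simp add: monom_def power_add prod.distrib)

lemma monom_unit: "monom (\<lambda>j. if j = i then 1 else 0) z = z i"
proof -
  have "monom (\<lambda>j. if j = i then 1 else 0) z = (\<Prod>j\<in>UNIV. if j = i then z j else 1)"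
    unfolding monom_def by (rule prod.cong) auto
  also have "\<dots> = z i" by (simp add: prod.delta)
  finally show ?thesis .
qed

lemma norm_monom: "norm (monom \<alpha> z) = (\<Prod>i\<in>UNIV. norm (z i) ^ \<alpha> i)"
  unfolding monom_def prod_norm[symmetric] by (simp add: norm_power)

lemma norm_monom_le: "z \<in> cpd \<Longrightarrow> norm (monom \<alpha> z) \<le> 1"
  unfolding norm_monom cpd_def
  by (auto intro!: prod_le_1 power_le_one)

lemma monom_split: "monom \<alpha> z = z i ^ \<alpha> i * monom (\<alpha>(i := 0)) z"
proof -
  have "monom \<alpha> z = z i ^ \<alpha> i * (\<Prod>j\<in>UNIV-{i}. z j ^ \<alpha> j)"
    unfolding monom_def by (simp add: prod.remove)
  moreover have "monom (\<alpha>(i := 0)) z = (\<Prod>j\<in>UNIV-{i}. z j ^ \<alpha> j)"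
  proof -
    have "monom (\<alpha>(i := 0)) z = z i ^ (\<alpha>(i:=0)) i * (\<Prod>j\<in>UNIV-{i}. z j ^ (\<alpha>(i:=0)) j)"
      unfolding monom_def by (rule prod.remove) auto
    also have "(\<Prod>j\<in>UNIV-{i}. z j ^ (\<alpha>(i:=0)) j) = (\<Prod>j\<in>UNIV-{i}. z j ^ \<alpha> j)"
      by (rule prod.cong) auto
    finally show ?thesis by (simp add: fun_upd_def)
  qed
  ultimately show ?thesis by simp
qed

lemma monom_upd_zero: "monom (\<alpha>(i := 0)) (z(i := w)) = monom (\<alpha>(i := 0)) z"
  unfolding monom_def by (rule prod.cong) auto

lemma monom_mult: "monom \<alpha> (\<lambda>i. a i * z i) = monom \<alpha> a * monom \<alpha> z"
  by (simp add: monom_def power_mult_distrib prod.distrib)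

lemma asum_summable: "asum c \<Longrightarrow> c summable_on UNIV"
  by (simp add: abs_summable_summable)

lemma asum_term:
  assumes "asum c" "z \<in> cpd"
  shows "asum (\<lambda>\<alpha>. c \<alpha> * monom \<alpha> z)"
proof (rule Infinite_Sum.abs_summable_on_comparison_test[OF assms(1)])
  fix \<alpha> :: "'a \<Rightarrow> nat" assume "\<alpha> \<in> UNIV"
  show "norm (c \<alpha> * monom \<alpha> z) \<le> norm (c \<alpha>)"
    using norm_monom_le[OF assms(2), of \<alpha>]
    by (simp add: norm_mult mult_left_le)
qed

lemma summable_term:
  assumes "asum c" "z \<in> cpd" shows "(\<lambda>\<alpha>. c \<alpha> * monom \<alpha> z) summable_on UNIV"
  using asum_summable[OF asum_term[OF assms]] by simp

lemma norm_series_eval: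
  assumes "asum c" "z \<in> cpd"
  shows "norm (series_eval c z) \<le> infsum (\<lambda>\<alpha>. norm (c \<alpha>)) UNIV"
proof -
  have "norm (series_eval c z) \<le> infsum (\<lambda>\<alpha>. norm (c \<alpha> * monom \<alpha> z)) UNIV"
    unfolding series_eval_def by (rule norm_infsum_bound) (rule asum_term[OF assms])
  also have "\<dots> \<le> infsum (\<lambda>\<alpha>. norm (c \<alpha>)) UNIV"
    apply (rule infsum_mono[OF asum_term[OF assms] assms(1)])
    using norm_monom_le[OF assms(2)] by (simp add: norm_mult mult_left_le)
  finally show ?thesis .
qed

definition ind :: "('n \<Rightarrow> nat) \<Rightarrow> ('n \<Rightarrow> nat) \<Rightarrow> complex" where
  "ind \<alpha> \<beta> = (if \<beta> = \<alpha> then 1 else 0)"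

lemma infsum_single:
  assumes "\<And>x. x \<noteq> a \<Longrightarrow> f x = 0"
  shows "infsum f UNIV = f a"
proof -
  have "infsum f UNIV = infsum f {a}"
    by (rule infsum_cong_neutral) (use assms in auto)
  then show ?thesis by simp
qed

lemma summable_single:
  assumes "\<And>x. x \<noteq> a \<Longrightarrow> f x = 0"
  shows "f summable_on UNIV"
proof -
  have "f summable_on {a}" by simp
  then show ?thesis
    by (rule summable_on_cong_neutral[THEN iffD1, rotated -1]) (use assms in auto)
qed

lemma asum_ind: "asum (ind \<alpha>)"
  by (rule summable_single[where a=\<alpha>]) (simp add: ind_def)

lemma series_eval_ind: "series_eval (\<lambda>\<beta>. a * ind \<alpha> \<beta>) z = a * monom \<alpha> z"
  unfolding series_eval_def
  by (subst infsum_single[where a=\<alpha>]) (auto simp: ind_def)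

lemma infsum_norm_ind: "infsum (\<lambda>\<beta>. norm (ind \<alpha> \<beta>)) UNIV = 1"
  by (subst infsum_single[where a=\<alpha>]) (auto simp: ind_def)

lemma rep_cong:
  "Aplus_rep f c \<Longrightarrow> (\<And>z. z \<in> polydisc \<Longrightarrow> f z = g z) \<Longrightarrow> Aplus_rep g c"
  by (simp add: Aplus_rep_def)

lemma rep_add:
  assumes "Aplus_rep f c" "Aplus_rep g d"
  shows "Aplus_rep (\<lambda>z. f z + g z) (\<lambda>\<alpha>. c \<alpha> + d \<alpha>)"
  unfolding Aplus_rep_def
proof (intro conjI ballI)
  have s: "asum c" "asum d" using assms by (auto simp: Aplus_rep_def)
  show "asum (\<lambda>\<alpha>. c \<alpha> + d \<alpha>)"
    apply (rule Infinite_Sum.abs_summable_on_comparison_test'[of "\<lambda>\<alpha>. norm (c \<alpha>) + norm (d \<alpha>)"])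
    using s by (auto intro: summable_on_add norm_triangle_ineq)
  fix z :: "'a \<Rightarrow> complex" assume z: "z \<in> polydisc"
  have "series_eval (\<lambda>\<alpha>. c \<alpha> + d \<alpha>) z = series_eval c z + series_eval d z"
    unfolding series_eval_def distrib_right
    by (rule infsum_add; rule summable_term) (use s polydisc_cpd[OF z] in auto)
  then show "series_eval (\<lambda>\<alpha>. c \<alpha> + d \<alpha>) z = f z + g z"
    using assms z by (simp add: Aplus_rep_def)
qed

lemma rep_scale:
  assumes "Aplus_rep f c"
  shows "Aplus_rep (\<lambda>z. a * f z) (\<lambda>\<alpha>. a * c \<alpha>)"
  unfolding Aplus_rep_def
proof (intro conjI ballI)
  have s: "asum c" using assms by (auto simp: Aplus_rep_def)
  show "asum (\<lambda>\<alpha>. a * c \<alpha>)"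
    using summable_on_cmult_right[OF s, of "norm a"] by (simp add: norm_mult)
  fix z :: "'a \<Rightarrow> complex" assume z: "z \<in> polydisc"
  have "series_eval (\<lambda>\<alpha>. a * c \<alpha>) z = a * series_eval c z"
    unfolding series_eval_def mult.assoc
    by (rule infsum_cmult_right) (rule summable_term[OF s polydisc_cpd[OF z]])
  then show "series_eval (\<lambda>\<alpha>. a * c \<alpha>) z = a * f z"
    using assms z by (simp add: Aplus_rep_def)
qed

lemma rep_monom: "Aplus_rep (monom \<alpha>) (ind \<alpha>)"
  unfolding Aplus_rep_def using series_eval_ind[of 1 \<alpha>] asum_ind by simp


lemma powser_unique:
  fixes b :: "nat \<Rightarrow> complex"
  assumes sb: "asum b"
    and z: "\<And>t::real. 0 < t \<Longrightarrow> t < 1 \<Longrightarrow> infsum (\<lambda>n. b n * of_real t ^ n) UNIV = 0"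
  shows "b n = 0"
proof (induction n rule: less_induct)
  case (less n)
  define B where "B = infsum (\<lambda>m. norm (b m)) UNIV"
  have B0: "B \<ge> 0" unfolding B_def by (rule infsum_nonneg) auto
  have key: "norm (b n) \<le> t * B" if t: "0 < t" "t < 1" for t :: real
  proof -
    have sb': "(\<lambda>m. norm (b m * of_real t ^ m)) summable_on A" for A
      apply (rule summable_on_subset_banach[of _ UNIV])
       apply (rule Infinite_Sum.abs_summable_on_comparison_test[OF sb])
      using t by (auto simp: norm_mult norm_power mult_left_le power_le_one)
    have sbA: "(\<lambda>m. norm (b m)) summable_on A" for A
      by (rule summable_on_subset_banach[OF sb]) auto
    have "0 = infsum (\<lambda>m. b m * of_real t ^ m) UNIV" using z t by simp
    also have "\<dots> = infsum (\<lambda>m. b m * of_real t ^ m) (insert n {n<..})"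
      by (rule infsum_cong_neutral) (use less in \<open>auto simp: not_less\<close>)
    also have "\<dots> = b n * of_real t ^ n + infsum (\<lambda>m. b m * of_real t ^ m) {n<..}"
      by (rule infsum_insert) (auto intro: abs_summable_summable sb')
    finally have eq: "b n * of_real t ^ n = - infsum (\<lambda>m. b m * of_real t ^ m) {n<..}"
      by (simp add: eq_neg_iff_add_eq_0 add.commute)
    have "norm (b n) * t ^ n = norm (infsum (\<lambda>m. b m * of_real t ^ m) {n<..})"
    proof -
      have "norm (b n * of_real t ^ n) = norm (infsum (\<lambda>m. b m * of_real t ^ m) {n<..})"
        using eq by simp
      then show ?thesis using t by (simp add: norm_mult norm_power)
    qed
    also have "\<dots> \<le> infsum (\<lambda>m. norm (b m * of_real t ^ m)) {n<..}"
      by (rule norm_infsum_bound) (rule sb')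
    also have "\<dots> \<le> infsum (\<lambda>m. norm (b m) * t ^ Suc n) {n<..}"
    proof (rule infsum_mono)
      show "(\<lambda>m. norm (b m * of_real t ^ m)) summable_on {n<..}" by (rule sb')
      show "(\<lambda>m. norm (b m) * t ^ Suc n) summable_on {n<..}"
        by (rule summable_on_cmult_left) (rule sbA)
      fix m assume "m \<in> {n<..}"
      then have "t ^ m \<le> t ^ Suc n" using t by (intro power_decreasing) auto
      then show "norm (b m * of_real t ^ m) \<le> norm (b m) * t ^ Suc n"
        using t by (simp add: norm_mult norm_power mult_left_mono)
    qed
    also have "\<dots> = infsum (\<lambda>m. norm (b m)) {n<..} * t ^ Suc n"
      by (rule infsum_cmult_left) (rule sbA)
    also have "\<dots> \<le> B * t ^ Suc n"
      unfolding B_def using t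
      by (intro mult_right_mono infsum_mono_neutral) (auto intro: sbA)
    finally have "norm (b n) * t ^ n \<le> (t * B) * t ^ n" by (simp add: algebra_simps)
    then show ?thesis using t by simp
  qed
  show ?case
  proof (rule ccontr)
    assume "b n \<noteq> 0"
    then have p: "norm (b n) > 0" by simp
    define t where "t = min (1/2) (norm (b n) / (2 * (B + 1)))"
    have t: "0 < t" "t < 1" using p B0 by (auto simp: t_def)
    have "t * B \<le> norm (b n) / (2 * (B + 1)) * B"
      using B0 t by (intro mult_right_mono) (auto simp: t_def)
    also have "\<dots> < norm (b n)"
      using p B0 by (simp add: field_simps add_nonneg_pos)
    finally show False using key[OF t] by simp
  qed
qed


definition Zs :: "'n \<Rightarrow> ('n \<Rightarrow> nat) set" where "Zs i = {\<beta>. \<beta> i = 0}"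

lemma regroup:
  fixes g :: "('n \<Rightarrow> nat) \<Rightarrow> 'b::banach"
  assumes g: "g summable_on UNIV"
  shows "(\<lambda>m. infsum (\<lambda>\<beta>. g (\<beta>(i:=m))) (Zs i)) summable_on UNIV"
    and "infsum g UNIV = infsum (\<lambda>m. infsum (\<lambda>\<beta>. g (\<beta>(i:=m))) (Zs i)) UNIV"
proof -
  have bij1: "\<And>a. a \<in> UNIV \<Longrightarrow> (\<lambda>(m,\<beta>). \<beta>(i:=m)) ((\<lambda>\<alpha>. (\<alpha> i, \<alpha>(i:=0))) a) = a"
    by auto
  have bij2: "\<And>a. a \<in> UNIV \<Longrightarrow> (\<lambda>\<alpha>. (\<alpha> i, \<alpha>(i:=0))) a \<in> UNIV \<times> Zs i"
    by (auto simp: Zs_def)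
  have bij3: "\<And>b. b \<in> UNIV \<times> Zs i \<Longrightarrow> (\<lambda>\<alpha>. (\<alpha> i, \<alpha>(i:=0))) ((\<lambda>(m,\<beta>). \<beta>(i:=m)) b) = b"
    by (auto simp: Zs_def fun_upd_idem)
  have bij4: "\<And>b. b \<in> UNIV \<times> Zs i \<Longrightarrow> (\<lambda>(m,\<beta>). \<beta>(i:=m)) b \<in> UNIV" by auto
  have s2: "(\<lambda>(m,\<beta>). g (\<beta>(i:=m))) summable_on UNIV \<times> Zs i"
    using summable_on_reindex_bij_witness[of UNIV "\<lambda>(m,\<beta>). \<beta>(i:=m)" "\<lambda>\<alpha>. (\<alpha> i, \<alpha>(i:=0))"
        "UNIV \<times> Zs i" "\<lambda>(m,\<beta>). g (\<beta>(i:=m))" g, OF bij1 bij2 bij3 bij4] g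
    by auto
  have e2: "infsum g UNIV = infsum (\<lambda>(m,\<beta>). g (\<beta>(i:=m))) (UNIV \<times> Zs i)"
    by (rule infsum_reindex_bij_witness[of UNIV "\<lambda>(m,\<beta>). \<beta>(i:=m)" "\<lambda>\<alpha>. (\<alpha> i, \<alpha>(i:=0))"])
       (auto simp: Zs_def fun_upd_idem)
  show "(\<lambda>m. infsum (\<lambda>\<beta>. g (\<beta>(i:=m))) (Zs i)) summable_on UNIV"
    using summable_on_Sigma_banach[of "\<lambda>m \<beta>. g (\<beta>(i:=m))" UNIV "\<lambda>_. Zs i"] s2 by simp
  show "infsum g UNIV = infsum (\<lambda>m. infsum (\<lambda>\<beta>. g (\<beta>(i:=m))) (Zs i)) UNIV"
    using infsum_Sigma'_banach[of "\<lambda>m \<beta>. g (\<beta>(i:=m))" UNIV "\<lambda>_. Zs i"] s2 e2 by simp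
qed

lemma zero_coeffs_aux:
  assumes "finite I"
  shows "\<forall>c::('n::finite \<Rightarrow> nat) \<Rightarrow> complex. (\<forall>\<alpha>. c \<alpha> \<noteq> 0 \<longrightarrow> (\<forall>j. j \<notin> I \<longrightarrow> \<alpha> j = 0)) \<longrightarrow> asum c
     \<longrightarrow> (\<forall>z\<in>polydisc. series_eval c z = 0) \<longrightarrow> (\<forall>\<alpha>. c \<alpha> = 0)"
  using assms
proof (induction I rule: finite_induct)
  case empty
  show ?case
  proof (intro allI impI)
    fix c :: "('n \<Rightarrow> nat) \<Rightarrow> complex" and \<alpha>
    assume supp: "\<forall>\<alpha>. c \<alpha> \<noteq> 0 \<longrightarrow> (\<forall>j. j \<notin> {} \<longrightarrow> \<alpha> j = 0)"
      and z: "\<forall>z\<in>polydisc. series_eval c z = 0"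
    have s0: "\<And>\<beta>. \<beta> \<noteq> (\<lambda>_. 0) \<Longrightarrow> c \<beta> = 0"
      using supp by auto
    have "(\<lambda>_. 0) \<in> (polydisc :: ('n \<Rightarrow> complex) set)" by (simp add: polydisc_def)
    then have "series_eval c (\<lambda>_. 0) = 0" using z by blast
    moreover have "series_eval c (\<lambda>_. 0) = c (\<lambda>_. 0)"
      unfolding series_eval_def by (subst infsum_single[where a="\<lambda>_. 0"]) (auto simp: s0)
    ultimately show "c \<alpha> = 0" using s0 by (cases "\<alpha> = (\<lambda>_. 0)") auto
  qed
next
  case (insert i I)
  show ?case
  proof (intro allI impI)
    fix c :: "('n \<Rightarrow> nat) \<Rightarrow> complex" and \<alpha>
    assume supp: "\<forall>\<alpha>. c \<alpha> \<noteq> 0 \<longrightarrow> (\<forall>j. j \<notin> insert i I \<longrightarrow> \<alpha> j = 0)"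
      and sc: "asum c"
      and z: "\<forall>z\<in>polydisc. series_eval c z = 0"
    define d where "d n \<beta> = (if \<beta> i = 0 then c (\<beta>(i := n)) else 0)" for n \<beta>
    have supp_d: "\<forall>\<beta>. d n \<beta> \<noteq> 0 \<longrightarrow> (\<forall>j. j \<notin> I \<longrightarrow> \<beta> j = 0)" for n
    proof (intro allI impI)
      fix \<beta> j assume "d n \<beta> \<noteq> 0" "j \<notin> I"
      then have b0: "\<beta> i = 0" and cn: "c (\<beta>(i := n)) \<noteq> 0" by (auto simp: d_def split: if_splits)
      show "\<beta> j = 0"
      proof (cases "j = i")
        case True then show ?thesis using b0 by simp
      next
        case False
        then show ?thesis using supp cn \<open>j \<notin> I\<close> by force
      qed
    qed
    have inj: "inj_on (\<lambda>\<beta>. \<beta>(i := n)) (Zs i)" for n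
      by (rule inj_onI) (auto simp: Zs_def fun_eq_iff split: if_splits, metis)
    have sZ: "(\<lambda>\<beta>. norm (c (\<beta>(i := n)))) summable_on Zs i" for n
    proof -
      have "(\<lambda>\<alpha>. norm (c \<alpha>)) summable_on ((\<lambda>\<beta>. \<beta>(i := n)) ` Zs i)"
        by (rule summable_on_subset_banach[OF sc]) auto
      then show ?thesis using summable_on_reindex[OF inj, of "\<lambda>\<alpha>. norm (c \<alpha>)"] by (simp add: o_def)
    qed
    have sd: "asum (d n)" for n
    proof -
      have "(\<lambda>\<beta>. norm (d n \<beta>)) summable_on Zs i"
        using sZ[of n] by (rule summable_on_cong[THEN iffD1, rotated]) (auto simp: d_def Zs_def)
      then show ?thesis
        by (rule summable_on_cong_neutral[THEN iffD1, rotated -1]) (auto simp: d_def Zs_def)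
    qed
    have ev: "series_eval (d n) w = 0" if w: "w \<in> polydisc" for w n
    proof -
      define b where "b m = series_eval (d m) w" for m
      have bZ: "b m = infsum (\<lambda>\<beta>. c (\<beta>(i := m)) * monom \<beta> w) (Zs i)" for m
        unfolding b_def series_eval_def
        by (rule infsum_cong_neutral) (auto simp: d_def Zs_def)
      have bnorm: "norm (b m) \<le> infsum (\<lambda>\<beta>. norm (c (\<beta>(i := m)))) (Zs i)" for m
      proof -
        have "norm (b m) \<le> infsum (\<lambda>\<beta>. norm (d m \<beta>)) UNIV"
          unfolding b_def by (rule norm_series_eval[OF sd polydisc_cpd[OF w]])
        also have "\<dots> = infsum (\<lambda>\<beta>. norm (c (\<beta>(i := m)))) (Zs i)"
          by (rule infsum_cong_neutral) (auto simp: d_def Zs_def)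
        finally show ?thesis .
      qed
      have sb: "asum b"
      proof (rule Infinite_Sum.abs_summable_on_comparison_test'[of "\<lambda>m. infsum (\<lambda>\<beta>. norm (c (\<beta>(i := m)))) (Zs i)"])
        show "(\<lambda>m. infsum (\<lambda>\<beta>. norm (c (\<beta>(i := m)))) (Zs i)) summable_on UNIV"
          using regroup(1)[of "\<lambda>\<alpha>. norm (c \<alpha>)" i] sc by simp
      qed (use bnorm in auto)
      have "b m = 0" for m
      proof (rule powser_unique[OF sb])
        fix t :: real assume t: "0 < t" "t < 1"
        define z where "z = w(i := of_real t)"
        have zp: "z \<in> polydisc" using w t by (auto simp: z_def polydisc_def)
        have "0 = series_eval c z" using z zp by simp
        also have "\<dots> = infsum (\<lambda>m. infsum (\<lambda>\<beta>. c (\<beta>(i:=m)) * monom (\<beta>(i:=m)) z) (Zs i)) UNIV"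
          unfolding series_eval_def
          by (rule regroup(2)) (rule summable_term[OF sc polydisc_cpd[OF zp]])
        also have "\<dots> = infsum (\<lambda>m. b m * of_real t ^ m) UNIV"
        proof (rule infsum_cong)
          fix m
          have "infsum (\<lambda>\<beta>. c (\<beta>(i:=m)) * monom (\<beta>(i:=m)) z) (Zs i)
              = infsum (\<lambda>\<beta>. of_real t ^ m * (c (\<beta>(i:=m)) * monom \<beta> w)) (Zs i)"
          proof (rule infsum_cong)
            fix \<beta> assume "\<beta> \<in> Zs i"
            then have b0: "\<beta> i = 0" by (simp add: Zs_def)
            have "monom (\<beta>(i:=m)) z = z i ^ m * monom (\<beta>(i:=0)) z"
              using monom_split[of "\<beta>(i:=m)" z i] by simp
            also have "monom (\<beta>(i:=0)) z = monom (\<beta>(i:=0)) w"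
              unfolding z_def by (rule monom_upd_zero)
            also have "\<beta>(i:=0) = \<beta>" using b0 by auto
            finally have "monom (\<beta>(i:=m)) z = of_real t ^ m * monom \<beta> w"
              by (simp only: z_def fun_upd_same)
            then show "c (\<beta>(i:=m)) * monom (\<beta>(i:=m)) z = of_real t ^ m * (c (\<beta>(i:=m)) * monom \<beta> w)"
              by simp
          qed
          also have "\<dots> = of_real t ^ m * b m"
            unfolding bZ by (rule infsum_cmult_right')
          finally show "infsum (\<lambda>\<beta>. c (\<beta>(i:=m)) * monom (\<beta>(i:=m)) z) (Zs i) = b m * of_real t ^ m"
            by simp
        qed
        finally show "infsum (\<lambda>m. b m * of_real t ^ m) UNIV = 0" by simp
      qed
      then show ?thesis by (simp add: b_def)
    qed
    have "\<forall>\<beta>. d n \<beta> = 0" for n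
      using insert.IH supp_d sd ev by blast
    then have "d (\<alpha> i) (\<alpha>(i := 0)) = 0" by blast
    then show "c \<alpha> = 0" by (simp add: d_def)
  qed
qed

lemma zero_coeffs:
  fixes c :: "('n::finite \<Rightarrow> nat) \<Rightarrow> complex"
  assumes "asum c" "\<And>z. z \<in> polydisc \<Longrightarrow> series_eval c z = 0"
  shows "c \<alpha> = 0"
  using zero_coeffs_aux[of "UNIV :: 'n set"] assms by auto


lemma rep_unique:
  assumes "Aplus_rep f c" "Aplus_rep f d"
  shows "c = d"
proof
  fix \<alpha>
  have r: "Aplus_rep (\<lambda>z. f z + (-1) * f z) (\<lambda>\<alpha>. c \<alpha> + (-1) * d \<alpha>)"
    by (rule rep_add[OF assms(1) rep_scale[OF assms(2)]])
  have "(\<lambda>\<alpha>. c \<alpha> + (-1) * d \<alpha>) \<alpha> = 0"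
    by (rule zero_coeffs) (use r in \<open>auto simp: Aplus_rep_def\<close>)
  then show "c \<alpha> = d \<alpha>" by simp
qed

lemma coeff_eq: "Aplus_rep f c \<Longrightarrow> Aplus_coeff f = c"
  unfolding Aplus_coeff_def by (rule the_equality) (auto intro: rep_unique)

lemma coeff_rep: "in_Aplus f \<Longrightarrow> Aplus_rep f (Aplus_coeff f)"
  unfolding in_Aplus_def using coeff_eq by auto

lemma norm_eq: "Aplus_rep f c \<Longrightarrow> Aplus_norm f = infsum (\<lambda>\<alpha>. norm (c \<alpha>)) UNIV"
  by (simp add: Aplus_norm_def coeff_eq)

lemma rep_asum: "Aplus_rep f c \<Longrightarrow> asum c"
  by (simp add: Aplus_rep_def)

lemma coeff_monom: "Aplus_coeff (monom \<alpha>) = ind \<alpha>"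
  by (rule coeff_eq[OF rep_monom])

lemma comp_monom: "comp_op \<phi> (monom \<alpha>) = (\<lambda>z. monom \<alpha> (\<lambda>i. \<phi> i z))"
  unfolding comp_op_def Aplus_ext_def coeff_monom
  using series_eval_ind[of 1 \<alpha>] by simp

lemma series_eval_one: "series_eval c (\<lambda>_. 1) = infsum c UNIV"
  by (simp add: series_eval_def)

lemma prod_sum:
  fixes f :: "'a \<Rightarrow> complex" and g :: "'b \<Rightarrow> complex"
  assumes f: "asum f" and g: "asum g"
  shows "(\<lambda>(x,y). norm (f x * g y)) summable_on UNIV \<times> UNIV"
    and "infsum (\<lambda>(x,y). f x * g y) (UNIV \<times> UNIV) = infsum f UNIV * infsum g UNIV"
    and "infsum (\<lambda>(x,y). norm (f x * g y)) (UNIV \<times> UNIV) = infsum (\<lambda>x. norm (f x)) UNIV * infsum (\<lambda>y. norm (g y)) UNIV"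
proof -
  have inner: "(\<lambda>y. norm (f x * g y)) summable_on UNIV" for x
    using summable_on_cmult_right[OF g, of "norm (f x)"] by (simp add: norm_mult)
  have innersum: "infsum (\<lambda>y. norm (f x * g y)) UNIV = norm (f x) * infsum (\<lambda>y. norm (g y)) UNIV" for x
    by (simp add: norm_mult infsum_cmult_right')
  have outer: "(\<lambda>x. infsum (\<lambda>y. norm (f x * g y)) UNIV) summable_on UNIV"
    unfolding innersum by (rule summable_on_cmult_left[OF f])
  have A: "(\<lambda>p. norm ((\<lambda>(x,y). f x * g y) p)) summable_on Sigma UNIV (\<lambda>_. UNIV)"
  proof (rule Infinite_Sum.abs_summable_on_Sigma_iff[THEN iffD2], intro conjI ballI)
    show "(\<lambda>y. norm ((\<lambda>(x,y). f x * g y) (x, y))) summable_on UNIV" for x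
      using inner[of x] by simp
    have nn: "0 \<le> infsum (\<lambda>y. norm (g y)) UNIV" by (rule infsum_nonneg) auto
    have "(\<lambda>x. norm (f x) * infsum (\<lambda>y. norm (g y)) UNIV) summable_on UNIV"
      by (rule summable_on_cmult_left[OF f])
    moreover have eq: "norm (infsum (\<lambda>y. norm ((\<lambda>(x,y). f x * g y) (x, y))) UNIV) = norm (f x) * infsum (\<lambda>y. norm (g y)) UNIV" for x
      using innersum[of x] nn by simp
    ultimately show "(\<lambda>x. norm (infsum (\<lambda>y. norm ((\<lambda>(x,y). f x * g y) (x, y))) UNIV)) summable_on UNIV"
      unfolding eq by blast
  qed
  then show "(\<lambda>(x,y). norm (f x * g y)) summable_on UNIV \<times> UNIV"
    by (simp add: case_prod_unfold)
  have B: "(\<lambda>(x,y). f x * g y) summable_on UNIV \<times> UNIV"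
    using abs_summable_summable[OF A] by simp
  have "infsum (\<lambda>(x,y). f x * g y) (UNIV \<times> UNIV) = infsum (\<lambda>x. infsum (\<lambda>y. f x * g y) UNIV) UNIV"
    using infsum_Sigma'_banach[of "\<lambda>x y. f x * g y" UNIV "\<lambda>_. UNIV"] B by simp
  also have "\<dots> = infsum (\<lambda>x. f x * infsum g UNIV) UNIV"
    by (simp add: infsum_cmult_right')
  also have "\<dots> = infsum f UNIV * infsum g UNIV"
    by (simp add: infsum_cmult_left')
  finally show "infsum (\<lambda>(x,y). f x * g y) (UNIV \<times> UNIV) = infsum f UNIV * infsum g UNIV" .
  have "infsum (\<lambda>(x,y). norm (f x * g y)) (UNIV \<times> UNIV) = infsum (\<lambda>x. infsum (\<lambda>y. norm (f x * g y)) UNIV) UNIV"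
    using infsum_Sigma'_banach[of "\<lambda>x y. norm (f x * g y)" UNIV "\<lambda>_. UNIV"] A
    by (simp add: case_prod_unfold)
  also have "\<dots> = infsum (\<lambda>x. norm (f x) * infsum (\<lambda>y. norm (g y)) UNIV) UNIV"
    by (simp add: innersum)
  also have "\<dots> = infsum (\<lambda>x. norm (f x)) UNIV * infsum (\<lambda>y. norm (g y)) UNIV"
    by (simp add: infsum_cmult_left')
  finally show "infsum (\<lambda>(x,y). norm (f x * g y)) (UNIV \<times> UNIV) = infsum (\<lambda>x. norm (f x)) UNIV * infsum (\<lambda>y. norm (g y)) UNIV" .
qed

definition lowset :: "('n::finite \<Rightarrow> nat) \<Rightarrow> ('n \<Rightarrow> nat) set" where
  "lowset \<gamma> = {\<alpha>. \<forall>i. \<alpha> i \<le> \<gamma> i}"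

lemma finite_lowset[simp]: "finite (lowset \<gamma>)"
proof -
  have "lowset \<gamma> \<subseteq> PiE UNIV (\<lambda>i. {..\<gamma> i})" by (auto simp: lowset_def PiE_def Pi_def)
  then show ?thesis by (rule finite_subset) (auto intro: finite_PiE)
qed

lemma pair_regroup:
  fixes F :: "('n::finite \<Rightarrow> nat) \<times> ('n \<Rightarrow> nat) \<Rightarrow> 'b::banach"
  assumes F: "F summable_on UNIV \<times> UNIV"
  shows "(\<lambda>\<gamma>. \<Sum>\<alpha>\<in>lowset \<gamma>. F (\<alpha>, \<lambda>i. \<gamma> i - \<alpha> i)) summable_on UNIV"
    and "infsum (\<lambda>\<gamma>. \<Sum>\<alpha>\<in>lowset \<gamma>. F (\<alpha>, \<lambda>i. \<gamma> i - \<alpha> i)) UNIV = infsum F (UNIV \<times> UNIV)"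
proof -
  let ?j = "\<lambda>(\<alpha>::'n\<Rightarrow>nat, \<beta>::'n\<Rightarrow>nat). ((\<lambda>i. \<alpha> i + \<beta> i), \<alpha>)"
  let ?i = "\<lambda>(\<gamma>::'n\<Rightarrow>nat, \<alpha>::'n\<Rightarrow>nat). (\<alpha>, \<lambda>i. \<gamma> i - \<alpha> i)"
  let ?h = "\<lambda>(\<gamma>, \<alpha>). F (\<alpha>, \<lambda>i. \<gamma> i - \<alpha> i)"
  have w1: "\<And>a. a \<in> UNIV \<times> UNIV \<Longrightarrow> ?i (?j a) = a" by auto
  have w2: "\<And>a. a \<in> UNIV \<times> UNIV \<Longrightarrow> ?j a \<in> Sigma UNIV lowset" by (auto simp: lowset_def)
  have w3: "\<And>b. b \<in> Sigma UNIV lowset \<Longrightarrow> ?j (?i b) = b" by (auto simp: lowset_def fun_eq_iff)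
  have w4: "\<And>b. b \<in> Sigma UNIV lowset \<Longrightarrow> ?i b \<in> UNIV \<times> UNIV" by auto
  have w5: "\<And>a. a \<in> UNIV \<times> UNIV \<Longrightarrow> ?h (?j a) = F a" by auto
  have S: "?h summable_on Sigma UNIV lowset"
    using summable_on_reindex_bij_witness[of "UNIV \<times> UNIV" ?i ?j "Sigma UNIV lowset" ?h F, OF w1 w2 w3 w4 w5] F
    by simp
  have E: "infsum F (UNIV \<times> UNIV) = infsum ?h (Sigma UNIV lowset)"
    by (rule infsum_reindex_bij_witness[of "UNIV \<times> UNIV" ?i ?j "Sigma UNIV lowset" ?h F, OF w1 w2 w3 w4 w5])
  have S': "(\<lambda>(\<gamma>, \<alpha>). (\<lambda>\<gamma> \<alpha>. F (\<alpha>, \<lambda>i. \<gamma> i - \<alpha> i)) \<gamma> \<alpha>) summable_on Sigma UNIV lowset"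
    using S by simp
  show "(\<lambda>\<gamma>. \<Sum>\<alpha>\<in>lowset \<gamma>. F (\<alpha>, \<lambda>i. \<gamma> i - \<alpha> i)) summable_on UNIV"
    using summable_on_Sigma_banach[OF S'] by simp
  show "infsum (\<lambda>\<gamma>. \<Sum>\<alpha>\<in>lowset \<gamma>. F (\<alpha>, \<lambda>i. \<gamma> i - \<alpha> i)) UNIV = infsum F (UNIV \<times> UNIV)"
    using infsum_Sigma'_banach[OF S'] E by simp
qed


definition conv :: "(('n::finite \<Rightarrow> nat) \<Rightarrow> complex) \<Rightarrow> (('n \<Rightarrow> nat) \<Rightarrow> complex) \<Rightarrow> ('n \<Rightarrow> nat) \<Rightarrow> complex" where
  "conv c d \<gamma> = (\<Sum>\<alpha>\<in>lowset \<gamma>. c \<alpha> * d (\<lambda>i. \<gamma> i - \<alpha> i))"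

definition convN :: "(('n::finite \<Rightarrow> nat) \<Rightarrow> complex) \<Rightarrow> (('n \<Rightarrow> nat) \<Rightarrow> complex) \<Rightarrow> ('n \<Rightarrow> nat) \<Rightarrow> real" where
  "convN c d \<gamma> = (\<Sum>\<alpha>\<in>lowset \<gamma>. norm (c \<alpha> * d (\<lambda>i. \<gamma> i - \<alpha> i)))"

lemma convN:
  assumes c: "asum c" and d: "asum d"
  shows "convN c d summable_on UNIV"
    and "infsum (convN c d) UNIV = infsum (\<lambda>\<alpha>. norm (c \<alpha>)) UNIV * infsum (\<lambda>\<alpha>. norm (d \<alpha>)) UNIV"
proof -
  have F: "(\<lambda>(x,y). norm (c x * d y)) summable_on UNIV \<times> UNIV" by (rule prod_sum(1)[OF c d])
  show "convN c d summable_on UNIV"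
    using pair_regroup(1)[OF F] by (simp add: convN_def[abs_def])
  show "infsum (convN c d) UNIV = infsum (\<lambda>\<alpha>. norm (c \<alpha>)) UNIV * infsum (\<lambda>\<alpha>. norm (d \<alpha>)) UNIV"
    using pair_regroup(2)[OF F] prod_sum(3)[OF c d] by (simp add: convN_def[abs_def])
qed

lemma norm_conv_le: "norm (conv c d \<gamma>) \<le> convN c d \<gamma>"
  unfolding conv_def convN_def by (rule norm_sum)

lemma asum_conv:
  assumes c: "asum c" and d: "asum d"
  shows "asum (conv c d)"
  by (rule Infinite_Sum.abs_summable_on_comparison_test'[OF convN(1)[OF c d]]) (rule norm_conv_le)

lemma norm_conv_sum_le:
  assumes c: "asum c" and d: "asum d"
  shows "infsum (\<lambda>\<gamma>. norm (conv c d \<gamma>)) UNIV \<le> infsum (\<lambda>\<alpha>. norm (c \<alpha>)) UNIV * infsum (\<lambda>\<alpha>. norm (d \<alpha>)) UNIV"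
  unfolding convN(2)[OF c d, symmetric]
  by (rule infsum_mono[OF asum_conv[OF c d] convN(1)[OF c d] norm_conv_le])

lemma monom_low:
  assumes "\<alpha> \<in> lowset \<gamma>"
  shows "monom \<alpha> z * monom (\<lambda>i. \<gamma> i - \<alpha> i) z = monom \<gamma> z"
proof -
  have "(\<lambda>i. \<alpha> i + (\<gamma> i - \<alpha> i)) = \<gamma>" using assms by (auto simp: lowset_def fun_eq_iff)
  then show ?thesis using monom_add[of \<alpha> "\<lambda>i. \<gamma> i - \<alpha> i" z] by simp
qed

lemma series_eval_conv:
  assumes c: "asum c" and d: "asum d" and z: "z \<in> cpd"
  shows "series_eval (conv c d) z = series_eval c z * series_eval d z"
proof -
  let ?f = "\<lambda>\<alpha>. c \<alpha> * monom \<alpha> z" and ?g = "\<lambda>\<alpha>. d \<alpha> * monom \<alpha> z"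
  have f: "asum ?f" and g: "asum ?g" using asum_term c d z by auto
  have Fa: "(\<lambda>(x,y). norm (?f x * ?g y)) summable_on UNIV \<times> UNIV" by (rule prod_sum(1)[OF f g])
  have F: "(\<lambda>(x,y). ?f x * ?g y) summable_on UNIV \<times> UNIV"
    using abs_summable_summable[of "\<lambda>(x,y). ?f x * ?g y" "UNIV \<times> UNIV"] Fa
    by (simp add: case_prod_unfold)
  have "series_eval c z * series_eval d z = infsum (\<lambda>(x,y). ?f x * ?g y) (UNIV \<times> UNIV)"
    unfolding series_eval_def by (rule prod_sum(2)[OF f g, symmetric])
  also have "\<dots> = infsum (\<lambda>\<gamma>. \<Sum>\<alpha>\<in>lowset \<gamma>. (\<lambda>(x,y). ?f x * ?g y) (\<alpha>, \<lambda>i. \<gamma> i - \<alpha> i)) UNIV"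
    by (rule pair_regroup(2)[OF F, symmetric])
  also have "\<dots> = infsum (\<lambda>\<gamma>. conv c d \<gamma> * monom \<gamma> z) UNIV"
  proof (rule infsum_cong)
    fix \<gamma>
    have "(\<Sum>\<alpha>\<in>lowset \<gamma>. (\<lambda>(x,y). ?f x * ?g y) (\<alpha>, \<lambda>i. \<gamma> i - \<alpha> i))
        = (\<Sum>\<alpha>\<in>lowset \<gamma>. c \<alpha> * d (\<lambda>i. \<gamma> i - \<alpha> i) * monom \<gamma> z)"
    proof (rule sum.cong)
      fix \<alpha> assume "\<alpha> \<in> lowset \<gamma>"
      then have "monom \<alpha> z * monom (\<lambda>i. \<gamma> i - \<alpha> i) z = monom \<gamma> z" by (rule monom_low)
      then show "(\<lambda>(x,y). ?f x * ?g y) (\<alpha>, \<lambda>i. \<gamma> i - \<alpha> i) = c \<alpha> * d (\<lambda>i. \<gamma> i - \<alpha> i) * monom \<gamma> z"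
        by (simp add: algebra_simps)
    qed simp
    also have "\<dots> = conv c d \<gamma> * monom \<gamma> z" by (simp add: conv_def sum_distrib_right)
    finally show "(\<Sum>\<alpha>\<in>lowset \<gamma>. (\<lambda>(x,y). ?f x * ?g y) (\<alpha>, \<lambda>i. \<gamma> i - \<alpha> i)) = conv c d \<gamma> * monom \<gamma> z" .
  qed
  finally show ?thesis by (simp add: series_eval_def)
qed

lemma conv_rep:
  assumes "Aplus_rep f c" "Aplus_rep g d"
  shows "Aplus_rep (\<lambda>z. f z * g z) (conv c d)"
proof -
  have c: "asum c" and d: "asum d" using assms by (auto simp: Aplus_rep_def)
  show ?thesis unfolding Aplus_rep_def
  proof (intro conjI ballI)
    show "asum (conv c d)" by (rule asum_conv[OF c d])
    fix z :: "'a \<Rightarrow> complex" assume z: "z \<in> polydisc"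
    then show "series_eval (conv c d) z = f z * g z"
      using series_eval_conv[OF c d polydisc_cpd[OF z]] assms by (simp add: Aplus_rep_def)
  qed
qed

lemma conv_sum:
  assumes c: "asum c" and d: "asum d"
  shows "infsum (conv c d) UNIV = infsum c UNIV * infsum d UNIV"
  using series_eval_conv[OF c d one_cpd] by (simp add: series_eval_one)

lemma conv_scale: "conv (\<lambda>\<alpha>. a * c \<alpha>) (\<lambda>\<beta>. b * d \<beta>) \<gamma> = a * b * conv c d \<gamma>"
  unfolding conv_def by (simp add: sum_distrib_left algebra_simps)

definition nonneg :: "complex \<Rightarrow> bool" where "nonneg x \<longleftrightarrow> Im x = 0 \<and> Re x \<ge> 0"

lemma nonneg_iff: "nonneg x \<longleftrightarrow> x = of_real (norm x)"
  unfolding nonneg_def by (auto simp: complex_eq_iff cmod_def)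

lemma nonneg_mult: "nonneg x \<Longrightarrow> nonneg y \<Longrightarrow> nonneg (x * y)"
  unfolding nonneg_def by simp

lemma nonneg_sum: "(\<And>a. a \<in> A \<Longrightarrow> nonneg (f a)) \<Longrightarrow> nonneg (sum f A)"
  unfolding nonneg_def by (induction A rule: infinite_finite_induct) auto

lemma conv_nonneg: "(\<And>\<alpha>. nonneg (c \<alpha>)) \<Longrightarrow> (\<And>\<alpha>. nonneg (d \<alpha>)) \<Longrightarrow> nonneg (conv c d \<gamma>)"
  unfolding conv_def by (intro nonneg_sum nonneg_mult) auto

lemma sdiff:
  fixes f g :: "'a \<Rightarrow> real"
  assumes "f summable_on A" "g summable_on A"
  shows "(\<lambda>x. f x - g x) summable_on A" "infsum (\<lambda>x. f x - g x) A = infsum f A - infsum g A"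
proof -
  have u: "(\<lambda>x. - g x) summable_on A" using summable_on_uminus assms(2) by blast
  show "(\<lambda>x. f x - g x) summable_on A"
    using summable_on_add[OF assms(1) u] by simp
  show "infsum (\<lambda>x. f x - g x) A = infsum f A - infsum g A"
    using infsum_add[OF assms(1) u] infsum_uminus[of g A] by simp
qed

lemma conv_nc:
  assumes c: "asum c" and d: "asum d"
    and eq: "infsum (\<lambda>\<gamma>. norm (conv c d \<gamma>)) UNIV = infsum (\<lambda>\<alpha>. norm (c \<alpha>)) UNIV * infsum (\<lambda>\<alpha>. norm (d \<alpha>)) UNIV"
    and ca: "c \<alpha> \<noteq> 0" and db: "d \<beta> \<noteq> 0"
  shows "conv c d (\<lambda>i. \<alpha> i + \<beta> i) \<noteq> 0"
proof -
  let ?D = "\<lambda>\<gamma>. convN c d \<gamma> - norm (conv c d \<gamma>)"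
  have sD: "?D summable_on UNIV"
    by (rule sdiff(1)[OF convN(1)[OF c d] asum_conv[OF c d]])
  have "infsum ?D UNIV = infsum (convN c d) UNIV - infsum (\<lambda>\<gamma>. norm (conv c d \<gamma>)) UNIV"
    by (rule sdiff(2)[OF convN(1)[OF c d] asum_conv[OF c d]])
  also have "\<dots> = 0" using convN(2)[OF c d] eq by simp
  finally have D0: "?D \<gamma> = 0" for \<gamma>
    using nonneg_infsum_le_0D[of ?D UNIV \<gamma>] sD norm_conv_le by auto
  let ?\<gamma> = "\<lambda>i. \<alpha> i + \<beta> i"
  have mem: "\<alpha> \<in> lowset ?\<gamma>" by (simp add: lowset_def)
  have "norm (c \<alpha> * d (\<lambda>i. ?\<gamma> i - \<alpha> i)) \<le> convN c d ?\<gamma>"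
    unfolding convN_def by (rule member_le_sum[OF mem]) auto
  moreover have "norm (c \<alpha> * d (\<lambda>i. ?\<gamma> i - \<alpha> i)) > 0"
    using ca db by simp
  ultimately show ?thesis using D0[of ?\<gamma>] by auto
qed


lemma para: fixes a b :: complex
  shows "norm (a + b)^2 + norm (a - b)^2 = 2 * norm a ^2 + 2 * norm b ^2"
  unfolding cmod_power2 by (simp add: algebra_simps power2_eq_square)

lemma cplx: fixes a b :: complex
  assumes "norm (a + b) = norm a + norm b" "norm (a - b) = norm a + norm b"
  shows "a = 0 \<or> b = 0"
proof -
  have "2 * (norm a + norm b)^2 = 2 * norm a ^2 + 2 * norm b ^2"
    using para[of a b] assms by simp
  then have "norm a * norm b = 0" by (simp add: power2_eq_square algebra_simps)
  then show ?thesis by simp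
qed

lemma infsum_two:
  assumes "a \<noteq> b" "\<And>x. x \<noteq> a \<Longrightarrow> x \<noteq> b \<Longrightarrow> f x = 0"
  shows "infsum f UNIV = f a + f b" "f summable_on UNIV"
proof -
  have "infsum f UNIV = infsum f {a, b}"
    by (rule infsum_cong_neutral) (use assms in auto)
  then show "infsum f UNIV = f a + f b" using assms by simp
  have "f summable_on {a, b}" by simp
  then show "f summable_on UNIV"
    by (rule summable_on_cong_neutral[THEN iffD1, rotated -1]) (use assms in auto)
qed

definition unitv :: "'n \<Rightarrow> 'n \<Rightarrow> nat" where "unitv i = (\<lambda>j. if j = i then 1 else 0)"

locale phictx =
  fixes \<phi> :: "'n::finite \<Rightarrow> ('n \<Rightarrow> complex) \<Rightarrow> complex"
  assumes maps_into: "\<And>z i. z \<in> polydisc \<Longrightarrow> norm (\<phi> i z) \<le> 1"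
    and bounded_op: "\<And>f. in_Aplus f \<Longrightarrow> in_Aplus (comp_op \<phi> f)"
begin

definition Phi :: "('n \<Rightarrow> nat) \<Rightarrow> ('n \<Rightarrow> complex) \<Rightarrow> complex" where
  "Phi \<alpha> = (\<lambda>z. monom \<alpha> (\<lambda>i. \<phi> i z))"

definition G :: "('n \<Rightarrow> nat) \<Rightarrow> ('n \<Rightarrow> nat) \<Rightarrow> complex" where
  "G \<alpha> = Aplus_coeff (Phi \<alpha>)"

lemma inA: "in_Aplus (Phi \<alpha>)"
proof -
  have "in_Aplus (monom \<alpha>)" using rep_monom by (auto simp: in_Aplus_def)
  moreover have "comp_op \<phi> (monom \<alpha>) = Phi \<alpha>" by (simp add: comp_monom Phi_def)
  ultimately show ?thesis using bounded_op by metis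
qed

lemma repG: "Aplus_rep (Phi \<alpha>) (G \<alpha>)"
  unfolding G_def by (rule coeff_rep[OF inA])

lemma asumG: "asum (G \<alpha>)"
  using repG rep_asum by blast

lemma G_add: "G (\<lambda>k. \<alpha> k + \<beta> k) = conv (G \<alpha>) (G \<beta>)"
proof -
  have "Aplus_rep (\<lambda>z. Phi \<alpha> z * Phi \<beta> z) (conv (G \<alpha>) (G \<beta>))"
    by (rule conv_rep[OF repG repG])
  then have "Aplus_rep (Phi (\<lambda>k. \<alpha> k + \<beta> k)) (conv (G \<alpha>) (G \<beta>))"
    by (rule rep_cong) (simp add: Phi_def monom_add)
  then show ?thesis unfolding G_def by (rule coeff_eq)
qed

lemma G_zero: "G (\<lambda>_. 0) = ind (\<lambda>_. 0)"
proof -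
  have "Phi (\<lambda>_. 0) = monom (\<lambda>_. 0)" by (simp add: Phi_def fun_eq_iff)
  then show ?thesis by (simp add: G_def coeff_monom)
qed

lemma Phi_unit: "Phi (unitv i) = \<phi> i"
  by (simp add: Phi_def unitv_def monom_unit fun_eq_iff)

lemma comp_Phi: "comp_op \<phi> (monom \<alpha>) = Phi \<alpha>"
  by (simp add: comp_monom Phi_def)

lemma phi_cpd: "z \<in> polydisc \<Longrightarrow> (\<lambda>i. \<phi> i z) \<in> cpd"
  using maps_into by (auto simp: cpd_def)

end

locale phiiso = phictx +
  assumes iso: "\<And>f. in_Aplus f \<Longrightarrow> Aplus_norm (comp_op \<phi> f) = Aplus_norm f"
begin

lemma normG: "infsum (\<lambda>\<gamma>. norm (G \<alpha> \<gamma>)) UNIV = 1"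
proof -
  have "in_Aplus (monom \<alpha>)" using rep_monom by (auto simp: in_Aplus_def)
  then have "Aplus_norm (Phi \<alpha>) = Aplus_norm (monom \<alpha>)" using iso comp_Phi by metis
  moreover have "Aplus_norm (monom \<alpha>) = 1"
    by (simp only: norm_eq[OF rep_monom] infsum_norm_ind)
  ultimately show ?thesis
    using norm_eq[OF repG] by simp
qed

lemma sign_case:
  assumes ne: "\<alpha> \<noteq> \<alpha>'" and s: "s = 1 \<or> s = -1"
  shows "norm (G \<alpha> \<gamma> + s * G \<alpha>' \<gamma>) = norm (G \<alpha> \<gamma>) + norm (G \<alpha>' \<gamma>)"
proof -
  define f where "f = (\<lambda>w. monom \<alpha> w + s * monom \<alpha>' w)"
  define cf where "cf = (\<lambda>\<beta>. ind \<alpha> \<beta> + s * ind \<alpha>' \<beta>)"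
  have rf: "Aplus_rep f cf"
    unfolding f_def cf_def by (rule rep_add[OF rep_monom rep_scale[OF rep_monom]])
  have inf: "in_Aplus f" using rf by (auto simp: in_Aplus_def)
  have ns: "norm s = 1" using s by auto
  have nf: "Aplus_norm f = 2"
    unfolding norm_eq[OF rf] using infsum_two(1)[OF ne, of "\<lambda>\<beta>. norm (cf \<beta>)"] ne ns
    by (auto simp: cf_def ind_def)
  have ev: "series_eval cf w = monom \<alpha> w + s * monom \<alpha>' w" for w
    unfolding series_eval_def using infsum_two(1)[OF ne, of "\<lambda>\<beta>. cf \<beta> * monom \<beta> w"] ne
    by (auto simp: cf_def ind_def)
  have "comp_op \<phi> f = (\<lambda>z. Phi \<alpha> z + s * Phi \<alpha>' z)"
    unfolding comp_op_def Aplus_ext_def coeff_eq[OF rf] ev by (simp add: Phi_def)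
  moreover have "Aplus_rep (\<lambda>z. Phi \<alpha> z + s * Phi \<alpha>' z) (\<lambda>\<gamma>. G \<alpha> \<gamma> + s * G \<alpha>' \<gamma>)"
    by (rule rep_add[OF repG rep_scale[OF repG]])
  ultimately have n2: "infsum (\<lambda>\<gamma>. norm (G \<alpha> \<gamma> + s * G \<alpha>' \<gamma>)) UNIV = 2"
    using iso[OF inf] nf norm_eq by metis
  have sa: "asum (\<lambda>\<gamma>. G \<alpha> \<gamma> + s * G \<alpha>' \<gamma>)"
    using rep_asum[OF rep_add[OF repG rep_scale[OF repG]]] by blast
  have s2: "(\<lambda>\<gamma>. norm (G \<alpha> \<gamma>) + norm (G \<alpha>' \<gamma>)) summable_on UNIV"
    by (rule summable_on_add[OF asumG asumG])
  have i2: "infsum (\<lambda>\<gamma>. norm (G \<alpha> \<gamma>) + norm (G \<alpha>' \<gamma>)) UNIV = 2"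
    using infsum_add[OF asumG asumG, of \<alpha> \<alpha>'] normG by simp
  let ?T = "\<lambda>\<gamma>. (norm (G \<alpha> \<gamma>) + norm (G \<alpha>' \<gamma>)) - norm (G \<alpha> \<gamma> + s * G \<alpha>' \<gamma>)"
  have sT: "?T summable_on UNIV" by (rule sdiff(1)[OF s2 sa])
  have iT: "infsum ?T UNIV = 0" using sdiff(2)[OF s2 sa] i2 n2 by simp
  have nT: "?T \<gamma> \<ge> 0" for \<gamma>
    using norm_triangle_ineq[of "G \<alpha> \<gamma>" "s * G \<alpha>' \<gamma>"] ns by (simp add: norm_mult)
  have "?T \<gamma> = 0"
    by (rule nonneg_infsum_le_0D[of ?T UNIV \<gamma>]) (use iT sT nT in auto)
  then show ?thesis by simp
qed

lemma disjG:
  assumes "\<alpha> \<noteq> \<alpha>'"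
  shows "G \<alpha> \<gamma> = 0 \<or> G \<alpha>' \<gamma> = 0"
proof -
  have "norm (G \<alpha> \<gamma> + G \<alpha>' \<gamma>) = norm (G \<alpha> \<gamma>) + norm (G \<alpha>' \<gamma>)"
    using sign_case[OF assms, of 1 \<gamma>] by simp
  moreover have "norm (G \<alpha> \<gamma> - G \<alpha>' \<gamma>) = norm (G \<alpha> \<gamma>) + norm (G \<alpha>' \<gamma>)"
    using sign_case[OF assms, of "-1" \<gamma>] by simp
  ultimately show ?thesis by (rule cplx)
qed

lemma add_spec:
  assumes "G \<alpha> \<gamma> \<noteq> 0" "G \<beta> \<delta> \<noteq> 0"
  shows "G (\<lambda>k. \<alpha> k + \<beta> k) (\<lambda>j. \<gamma> j + \<delta> j) \<noteq> 0"
proof -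
  have e: "infsum (\<lambda>\<gamma>. norm (conv (G \<alpha>) (G \<beta>) \<gamma>)) UNIV = 1"
    using normG[of "\<lambda>k. \<alpha> k + \<beta> k"] unfolding G_add[of \<alpha> \<beta>] .
  have "conv (G \<alpha>) (G \<beta>) (\<lambda>j. \<gamma> j + \<delta> j) \<noteq> 0"
    by (rule conv_nc[OF asumG asumG _ assms]) (simp only: e normG mult_1)
  then show ?thesis unfolding G_add[of \<alpha> \<beta>] .
qed

end


lemma counting:
  fixes P :: "('n::finite \<Rightarrow> nat) \<Rightarrow> nat \<Rightarrow> ('n \<Rightarrow> nat)" and r :: 'n and C :: nat
  assumes disj: "\<And>\<alpha> \<alpha>' x x'. \<alpha> \<noteq> \<alpha>' \<Longrightarrow> x \<le> \<alpha> r \<Longrightarrow> x' \<le> \<alpha>' r \<Longrightarrow> P \<alpha> x \<noteq> P \<alpha>' x'"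
    and inj: "\<And>\<alpha> x x'. x \<le> \<alpha> r \<Longrightarrow> x' \<le> \<alpha> r \<Longrightarrow> P \<alpha> x = P \<alpha> x' \<Longrightarrow> x = x'"
    and bound: "\<And>\<alpha> x j M. (\<forall>k. \<alpha> k \<le> M) \<Longrightarrow> x \<le> \<alpha> r \<Longrightarrow> P \<alpha> x j \<le> C * M"
  shows False
proof -
  define k where "k = CARD('n)"
  define N where "N = (2 * C + 1) ^ k"
  define B where "B = (\<lambda>k. if k = r then {N..2*N} else {..N})"
  define A where "A = PiE UNIV B"
  define T where "T = PiE UNIV (\<lambda>_::'n. {..C * (2 * N)})"
  define Q where "Q \<alpha> = P \<alpha> ` {..N}" for \<alpha>
  have memA: "\<alpha> \<in> A \<longleftrightarrow> (N \<le> \<alpha> r \<and> \<alpha> r \<le> 2 * N \<and> (\<forall>k. k \<noteq> r \<longrightarrow> \<alpha> k \<le> N))" for \<alpha>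
    by (auto simp: A_def B_def PiE_UNIV_domain Pi_def)
  have cardA: "card A = (N + 1) ^ k"
  proof -
    have "card A = (\<Prod>j\<in>UNIV. card (B j))" unfolding A_def by (simp add: card_PiE)
    also have "\<dots> = (\<Prod>j\<in>(UNIV::'n set). N + 1)"
      by (rule prod.cong) (auto simp: B_def)
    finally show ?thesis by (simp add: k_def)
  qed
  have cardT: "card T = (C * (2 * N) + 1) ^ k"
    unfolding T_def by (simp add: card_PiE k_def)
  have finT: "finite T" unfolding T_def by (simp add: finite_PiE)
  have finA: "finite A" unfolding A_def by (rule finite_PiE) (auto simp: B_def)
  have cardQ: "card (Q \<alpha>) = N + 1" if "\<alpha> \<in> A" for \<alpha>
  proof -
    have N: "N \<le> \<alpha> r" using memA that by auto
    have "inj_on (P \<alpha>) {..N}"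
    proof (rule inj_onI)
      fix x y assume "x \<in> {..N}" "y \<in> {..N}" "P \<alpha> x = P \<alpha> y"
      then show "x = y" using inj[of x \<alpha> y] N by auto
    qed
    then show ?thesis by (simp add: Q_def card_image)
  qed
  have QT: "Q \<alpha> \<subseteq> T" if "\<alpha> \<in> A" for \<alpha>
  proof
    fix y assume "y \<in> Q \<alpha>"
    then obtain x where x: "x \<le> N" "y = P \<alpha> x" by (auto simp: Q_def)
    have a: "\<forall>k. \<alpha> k \<le> 2 * N" using memA that by (metis le_trans mult_le_mono1 nat_mult_1 one_le_numeral)
    have "x \<le> \<alpha> r" using x memA that by auto
    then show "y \<in> T" using bound[OF a] x by (auto simp: T_def PiE_UNIV_domain)
  qed
  have disjQ: "Q \<alpha> \<inter> Q \<alpha>' = {}" if "\<alpha> \<in> A" "\<alpha>' \<in> A" "\<alpha> \<noteq> \<alpha>'" for \<alpha> \<alpha>'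
  proof -
    have "N \<le> \<alpha> r" "N \<le> \<alpha>' r" using that memA by auto
    then show ?thesis using disj[OF that(3)] by (auto simp: Q_def intro: order_trans)
  qed
  have "card (\<Union>\<alpha>\<in>A. Q \<alpha>) = (\<Sum>\<alpha>\<in>A. card (Q \<alpha>))"
  proof -
    have finQ: "\<forall>\<alpha>\<in>A. finite (Q \<alpha>)" by (simp add: Q_def)
    have dQ: "\<forall>\<alpha>\<in>A. \<forall>\<alpha>'\<in>A. \<alpha> \<noteq> \<alpha>' \<longrightarrow> Q \<alpha> \<inter> Q \<alpha>' = {}" using disjQ by blast
    show ?thesis by (rule card_UN_disjoint[OF finA finQ dQ])
  qed
  also have "\<dots> = card A * (N + 1)" using cardQ by simp
  finally have c1: "card (\<Union>\<alpha>\<in>A. Q \<alpha>) = (N + 1) ^ Suc k" using cardA by simp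
  have "card (\<Union>\<alpha>\<in>A. Q \<alpha>) \<le> card T"
    by (rule card_mono[OF finT]) (use QT in auto)
  then have "(N + 1) ^ Suc k \<le> (C * (2 * N) + 1) ^ k" using c1 cardT by simp
  also have "\<dots> \<le> ((2 * C + 1) * (N + 1)) ^ k"
    by (rule power_mono) (auto simp: algebra_simps)
  also have "\<dots> = (2 * C + 1) ^ k * (N + 1) ^ k" by (rule power_mult_distrib)
  finally have "(N + 1) * (N + 1) ^ k \<le> N * (N + 1) ^ k" by (simp add: N_def)
  then have "N + 1 \<le> N" by simp
  then show False by simp
qed


lemma arith_inj:
  fixes x x' a b s c :: nat
  assumes "x \<le> a" "x' \<le> a" "b \<noteq> s" "x * b + (a - x) * s + c = x' * b + (a - x') * s + c"
  shows "x = x'"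
proof -
  have "int (x * b + (a - x) * s) = int x * int b + (int a - int x) * int s"
    using assms(1) by (simp add: of_nat_diff)
  moreover have "int (x' * b + (a - x') * s) = int x' * int b + (int a - int x') * int s"
    using assms(2) by (simp add: of_nat_diff)
  moreover have "int (x * b + (a - x) * s) = int (x' * b + (a - x') * s)"
    using assms(4) by simp
  ultimately have "int x * int b + (int a - int x) * int s = int x' * int b + (int a - int x') * int s"
    by linarith
  then have "(int x - int x') * (int b - int s) = 0" by (simp add: algebra_simps)
  then show ?thesis using assms(3) by simp
qed

lemma sup_monom:
  fixes s :: "'n::finite \<Rightarrow> nat"
  shows "(SUP z\<in>polydisc. norm (monom s z)) = 1"
proof -
  define m where "m = (\<Sum>k\<in>UNIV. s k)"
  have ne: "(polydisc :: ('n \<Rightarrow> complex) set) \<noteq> {}"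
    by (auto simp: polydisc_def intro!: exI[of _ "\<lambda>_. 0"])
  have le1: "norm (monom s z) \<le> 1" if "z \<in> polydisc" for z
    using norm_monom_le[OF polydisc_cpd[OF that]] .
  have bdd: "bdd_above ((\<lambda>z. norm (monom s z)) ` polydisc)"
    by (meson bdd_aboveI2 le1)
  have val: "norm (monom s (\<lambda>_::'n. complex_of_real t)) = t ^ m" if "0 \<le> t" for t
    unfolding norm_monom m_def power_sum using that by simp
  have mem: "(\<lambda>_::'n. complex_of_real t) \<in> polydisc" if "0 \<le> t" "t < 1" for t
    using that by (simp add: polydisc_def)
  define S where "S = (SUP z\<in>polydisc. norm (monom s z))"
  have up: "t ^ m \<le> S" if "0 \<le> t" "t < 1" for t
    unfolding S_def using cSUP_upper[OF mem[OF that] bdd] val[OF that(1)] by simp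
  have "S \<le> 1" unfolding S_def by (rule cSUP_least[OF ne le1])
  moreover have "S \<ge> 1"
  proof (rule ccontr)
    assume "\<not> S \<ge> 1"
    then have S1: "S < 1" by simp
    have S0: "0 \<le> S" using up[of 0] by (cases m) auto
    define \<delta> where "\<delta> = (1 - S) / (2 * (real m + 1))"
    have d: "0 < \<delta>" "\<delta> \<le> 1/2" using S1 S0 by (auto simp: \<delta>_def field_simps)
    have "1 + real m * (- \<delta>) \<le> (1 + (- \<delta>)) ^ m"
      by (rule Bernoulli_inequality) (use d in auto)
    also have "\<dots> \<le> S" using up[of "1 - \<delta>"] d by simp
    finally have "1 - real m * \<delta> \<le> S" by simp
    moreover have "real m * \<delta> < 1 - S"
    proof -
      have q: "real m / (2 * (real m + 1)) < 1" by (simp add: field_simps)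
      have "real m * \<delta> = (1 - S) * (real m / (2 * (real m + 1)))" by (simp add: \<delta>_def field_simps)
      also have "\<dots> < (1 - S) * 1" by (rule mult_strict_left_mono[OF q]) (use S1 in simp)
      finally show ?thesis by simp
    qed
    ultimately show False by simp
  qed
  ultimately show ?thesis unfolding S_def by simp
qed

context phiiso
begin

lemma G_zero_at: "G (\<lambda>_. 0) (\<lambda>_. 0) = 1" by (simp add: G_zero ind_def)

lemma spec_ne: "\<exists>\<gamma>. G \<alpha> \<gamma> \<noteq> 0"
proof (rule ccontr)
  assume "\<not> (\<exists>\<gamma>. G \<alpha> \<gamma> \<noteq> 0)"
  then have "infsum (\<lambda>\<gamma>. norm (G \<alpha> \<gamma>)) UNIV = 0" by simp
  then show False using normG by simp
qed

lemma mult_spec: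
  assumes b: "G (unitv i) \<beta> \<noteq> 0" and s: "G (unitv i) s \<noteq> 0"
  shows "x \<le> n \<Longrightarrow> G (\<lambda>k. n * unitv i k) (\<lambda>j. x * \<beta> j + (n - x) * s j) \<noteq> 0"
proof (induction n arbitrary: x)
  case 0
  then show ?case using G_zero_at by simp
next
  case (Suc n)
  have e1: "(\<lambda>k. n * unitv i k + unitv i k) = (\<lambda>k. Suc n * unitv i k)" by auto
  show ?case
  proof (cases "x \<le> n")
    case True
    have "G (\<lambda>k. n * unitv i k + unitv i k) (\<lambda>j. (x * \<beta> j + (n - x) * s j) + s j) \<noteq> 0"
      by (rule add_spec[OF Suc.IH[OF True] s])
    moreover have "(\<lambda>j. (x * \<beta> j + (n - x) * s j) + s j) = (\<lambda>j. x * \<beta> j + (Suc n - x) * s j)"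
      using True by (auto simp: fun_eq_iff Suc_diff_le)
    ultimately show ?thesis using e1 by simp
  next
    case False
    then have x: "x = Suc n" using Suc.prems by simp
    have "G (\<lambda>k. n * unitv i k + unitv i k) (\<lambda>j. (n * \<beta> j + (n - n) * s j) + \<beta> j) \<noteq> 0"
      by (rule add_spec[OF Suc.IH[of n] b]) simp
    moreover have "(\<lambda>j. (n * \<beta> j + (n - n) * s j) + \<beta> j) = (\<lambda>j. x * \<beta> j + (Suc n - x) * s j)"
      using x by (auto simp: fun_eq_iff)
    ultimately show ?thesis using e1 by simp
  qed
qed

lemma sum_spec:
  assumes "finite I" and \<sigma>: "\<And>i. G (unitv i) (\<sigma> i) \<noteq> 0"
  shows "G (\<lambda>k. if k \<in> I then \<alpha> k else 0) (\<lambda>j. \<Sum>i\<in>I. \<alpha> i * \<sigma> i j) \<noteq> 0"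
  using assms(1)
proof (induction I rule: finite_induct)
  case empty
  then show ?case using G_zero_at by simp
next
  case (insert i I)
  have m: "G (\<lambda>k. \<alpha> i * unitv i k) (\<lambda>j. 0 * \<sigma> i j + (\<alpha> i - 0) * \<sigma> i j) \<noteq> 0"
    by (rule mult_spec[OF \<sigma> \<sigma>]) simp
  have "G (\<lambda>k. (if k \<in> I then \<alpha> k else 0) + \<alpha> i * unitv i k)
          (\<lambda>j. (\<Sum>i\<in>I. \<alpha> i * \<sigma> i j) + (0 * \<sigma> i j + (\<alpha> i - 0) * \<sigma> i j)) \<noteq> 0"
    by (rule add_spec[OF insert.IH m])
  moreover have "(\<lambda>k. (if k \<in> I then \<alpha> k else 0) + \<alpha> i * unitv i k) = (\<lambda>k. if k \<in> insert i I then \<alpha> k else 0)"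
    using insert.hyps by (auto simp: fun_eq_iff unitv_def)
  moreover have "(\<lambda>j. (\<Sum>i\<in>I. \<alpha> i * \<sigma> i j) + (0 * \<sigma> i j + (\<alpha> i - 0) * \<sigma> i j)) = (\<lambda>j. \<Sum>i\<in>insert i I. \<alpha> i * \<sigma> i j)"
    using insert.hyps by (auto simp: fun_eq_iff)
  ultimately show ?case by simp
qed

lemma sel_spec:
  assumes b: "G (unitv i0) \<beta> \<noteq> 0" and \<sigma>: "\<And>i. G (unitv i) (\<sigma> i) \<noteq> 0" and x: "x \<le> \<alpha> i0"
  shows "G \<alpha> (\<lambda>j. x * \<beta> j + (\<alpha> i0 - x) * \<sigma> i0 j + (\<Sum>i\<in>UNIV-{i0}. \<alpha> i * \<sigma> i j)) \<noteq> 0"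
proof -
  have "G (\<lambda>k. \<alpha> i0 * unitv i0 k + (if k \<in> UNIV-{i0} then \<alpha> k else 0))
     (\<lambda>j. (x * \<beta> j + (\<alpha> i0 - x) * \<sigma> i0 j) + (\<Sum>i\<in>UNIV-{i0}. \<alpha> i * \<sigma> i j)) \<noteq> 0"
    by (rule add_spec[OF mult_spec[OF b \<sigma> x] sum_spec[OF _ \<sigma>]]) simp
  moreover have "(\<lambda>k. \<alpha> i0 * unitv i0 k + (if k \<in> UNIV-{i0} then \<alpha> k else 0)) = \<alpha>"
    by (auto simp: fun_eq_iff unitv_def)
  ultimately show ?thesis by simp
qed

lemma unique_spec:
  assumes b: "G (unitv i0) \<beta> \<noteq> 0" and s: "G (unitv i0) s \<noteq> 0"
  shows "\<beta> = s"
proof (rule ccontr)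
  assume ne: "\<beta> \<noteq> s"
  then obtain j0 where j0: "\<beta> j0 \<noteq> s j0" by auto
  define \<sigma> where "\<sigma> i = (if i = i0 then s else (SOME \<gamma>. G (unitv i) \<gamma> \<noteq> 0))" for i
  have \<sigma>: "G (unitv i) (\<sigma> i) \<noteq> 0" for i
  proof (cases "i = i0")
    case True then show ?thesis using s by (simp add: \<sigma>_def)
  next
    case False then show ?thesis unfolding \<sigma>_def using someI_ex[OF spec_ne[of "unitv i"]] by simp
  qed
  have \<sigma>0: "\<sigma> i0 = s" by (simp add: \<sigma>_def)
  define P where "P \<alpha> x = (\<lambda>j. x * \<beta> j + (\<alpha> i0 - x) * s j + (\<Sum>i\<in>UNIV-{i0}. \<alpha> i * \<sigma> i j))" for \<alpha> x
  define C where "C = (\<Sum>j\<in>UNIV. \<beta> j + s j + (\<Sum>i\<in>UNIV. \<sigma> i j))"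
  have inspec: "G \<alpha> (P \<alpha> x) \<noteq> 0" if "x \<le> \<alpha> i0" for \<alpha> x
    using sel_spec[of i0 \<beta> \<sigma> x \<alpha>, OF b \<sigma> that] \<sigma>0 by (simp add: P_def)
  show False
  proof (rule counting[where P=P and r=i0 and C=C])
    fix \<alpha> \<alpha>' :: "'a \<Rightarrow> nat" and x x' :: nat assume "\<alpha> \<noteq> \<alpha>'" "x \<le> \<alpha> i0" "x' \<le> \<alpha>' i0"
    then show "P \<alpha> x \<noteq> P \<alpha>' x'" using disjG[of \<alpha> \<alpha>' "P \<alpha> x"] inspec by metis
  next
    fix \<alpha> :: "'a \<Rightarrow> nat" and x x' :: nat assume "x \<le> \<alpha> i0" "x' \<le> \<alpha> i0" "P \<alpha> x = P \<alpha> x'"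
    then have "P \<alpha> x j0 = P \<alpha> x' j0" by simp
    then show "x = x'" using arith_inj[OF \<open>x \<le> \<alpha> i0\<close> \<open>x' \<le> \<alpha> i0\<close> j0] by (simp add: P_def)
  next
    fix \<alpha> :: "'a \<Rightarrow> nat" and x M :: nat and j :: 'a assume a: "\<forall>k. \<alpha> k \<le> M" and x: "x \<le> \<alpha> i0"
    have h1: "x * \<beta> j \<le> M * \<beta> j" using x a by (meson le_trans mult_le_mono1)
    have h2: "(\<alpha> i0 - x) * s j \<le> M * s j" using a by (meson diff_le_self le_trans mult_le_mono1)
    have h3: "(\<Sum>i\<in>UNIV-{i0}. \<alpha> i * \<sigma> i j) \<le> (\<Sum>i\<in>UNIV. M * \<sigma> i j)"
    proof -
      have "(\<Sum>i\<in>UNIV-{i0}. \<alpha> i * \<sigma> i j) \<le> (\<Sum>i\<in>UNIV. \<alpha> i * \<sigma> i j)"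
        by (rule sum_mono2) auto
      also have "\<dots> \<le> (\<Sum>i\<in>UNIV. M * \<sigma> i j)"
        by (rule sum_mono) (use a in \<open>auto intro: mult_le_mono1\<close>)
      finally show ?thesis .
    qed
    have "P \<alpha> x j = x * \<beta> j + (\<alpha> i0 - x) * s j + (\<Sum>i\<in>UNIV-{i0}. \<alpha> i * \<sigma> i j)"
      by (simp add: P_def)
    also have "\<dots> \<le> M * \<beta> j + M * s j + (\<Sum>i\<in>UNIV. M * \<sigma> i j)"
      by (rule add_mono[OF add_mono[OF h1 h2] h3])
    also have "\<dots> = M * (\<beta> j + s j + (\<Sum>i\<in>UNIV. \<sigma> i j))"
      by (simp add: sum_distrib_left algebra_simps)
    also have "\<dots> \<le> M * C"
      unfolding C_def by (rule mult_le_mono2) (rule member_le_sum[where f = "\<lambda>j. \<beta> j + s j + (\<Sum>i\<in>UNIV. \<sigma> i j)"], auto)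
    finally show "P \<alpha> x j \<le> C * M" by (simp add: mult.commute)
  qed
qed

lemma fwd_a:
  "\<exists>\<epsilon> F. norm \<epsilon> = 1 \<and> in_Aplus F
          \<and> (\<forall>\<beta>. Im (Aplus_coeff F \<beta>) = 0 \<and> Re (Aplus_coeff F \<beta>) \<ge> 0)
          \<and> (\<forall>z\<in>polydisc. \<phi> i z = \<epsilon> * F z)
          \<and> Aplus_ext F (\<lambda>_. 1) = 1
          \<and> (SUP z\<in>polydisc. norm (F z)) = 1"
proof -
  obtain s where s: "G (unitv i) s \<noteq> 0" using spec_ne by blast
  have z: "G (unitv i) \<gamma> = 0" if "\<gamma> \<noteq> s" for \<gamma>
    using unique_spec[OF _ s] that by blast
  define \<epsilon> where "\<epsilon> = G (unitv i) s"
  have "norm \<epsilon> = 1"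
    using normG[of "unitv i"] infsum_single[where a=s and f="\<lambda>\<gamma>. norm (G (unitv i) \<gamma>)"] z
    by (simp add: \<epsilon>_def)
  moreover have "in_Aplus (monom s)" using rep_monom by (auto simp: in_Aplus_def)
  moreover have "\<forall>\<beta>. Im (Aplus_coeff (monom s) \<beta>) = 0 \<and> Re (Aplus_coeff (monom s) \<beta>) \<ge> 0"
    by (simp add: coeff_monom ind_def)
  moreover have "\<forall>z\<in>polydisc. \<phi> i z = \<epsilon> * monom s z"
  proof
    fix w :: "'a \<Rightarrow> complex" assume w: "w \<in> polydisc"
    have "\<phi> i w = series_eval (G (unitv i)) w"
      using repG[of "unitv i"] w by (simp add: Aplus_rep_def Phi_unit)
    also have "\<dots> = \<epsilon> * monom s w"
      unfolding series_eval_def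
      by (subst infsum_single[where a=s]) (auto simp: z \<epsilon>_def)
    finally show "\<phi> i w = \<epsilon> * monom s w" .
  qed
  moreover have "Aplus_ext (monom s) (\<lambda>_. 1) = 1"
    unfolding Aplus_ext_def coeff_monom using series_eval_ind[of 1 s "\<lambda>_. 1"] by simp
  moreover have "(SUP z\<in>polydisc. norm (monom s z)) = 1" by (rule sup_monom)
  ultimately show ?thesis by blast
qed

lemma fwd_b:
  "\<forall>\<alpha> \<alpha>'. \<alpha> \<noteq> \<alpha>' \<longrightarrow>
          spectrum_Aplus (\<lambda>z. monom \<alpha> (\<lambda>i. \<phi> i z)) \<inter>
          spectrum_Aplus (\<lambda>z. monom \<alpha>' (\<lambda>i. \<phi> i z)) = {}"
  using disjG by (auto simp: spectrum_Aplus_def G_def Phi_def)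

end


lemma unit_induct:
  fixes P :: "('n::finite \<Rightarrow> nat) \<Rightarrow> bool"
  assumes P0: "P (\<lambda>_. 0)" and step: "\<And>\<alpha> i. P \<alpha> \<Longrightarrow> P (\<lambda>k. \<alpha> k + unitv i k)"
  shows "P \<alpha>"
proof -
  have "\<forall>\<alpha>. sum \<alpha> UNIV = n \<longrightarrow> P \<alpha>" for n
  proof (induction n)
    case 0
    then show ?case using P0 by (auto simp: fun_eq_iff)
  next
    case (Suc n)
    show ?case
    proof (intro allI impI)
      fix \<alpha> :: "'n \<Rightarrow> nat" assume s: "sum \<alpha> UNIV = Suc n"
      have "\<exists>i. \<alpha> i \<noteq> 0"
      proof (rule ccontr)
        assume "\<not> (\<exists>i. \<alpha> i \<noteq> 0)"
        then have "sum \<alpha> UNIV = 0" by simp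
        with s show False by simp
      qed
      then obtain i where i: "\<alpha> i > 0" by auto
      define \<alpha>' where "\<alpha>' = \<alpha>(i := \<alpha> i - 1)"
      have "sum \<alpha> UNIV = \<alpha> i + sum \<alpha> (UNIV - {i})" by (rule sum.remove) auto
      moreover have "sum \<alpha>' UNIV = \<alpha>' i + sum \<alpha>' (UNIV - {i})" by (rule sum.remove) auto
      moreover have "sum \<alpha>' (UNIV - {i}) = sum \<alpha> (UNIV - {i})"
        by (rule sum.cong) (auto simp: \<alpha>'_def)
      ultimately have "sum \<alpha>' UNIV = n" using s i by (simp add: \<alpha>'_def)
      then have "P \<alpha>'" using Suc.IH by blast
      then have "P (\<lambda>k. \<alpha>' k + unitv i k)" by (rule step)
      moreover have "(\<lambda>k. \<alpha>' k + unitv i k) = \<alpha>" using i by (auto simp: \<alpha>'_def unitv_def fun_eq_iff)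
      ultimately show "P \<alpha>" by simp
    qed
  qed
  then show ?thesis by blast
qed

context phictx
begin

lemma rev_main:
  fixes \<epsilon> :: "'n \<Rightarrow> complex" and F :: "'n \<Rightarrow> ('n \<Rightarrow> complex) \<Rightarrow> complex"
  assumes \<epsilon>: "\<And>i. norm (\<epsilon> i) = 1" and inF: "\<And>i. in_Aplus (F i)"
    and nnF: "\<And>i \<beta>. nonneg (Aplus_coeff (F i) \<beta>)"
    and phiF: "\<And>i z. z \<in> polydisc \<Longrightarrow> \<phi> i z = \<epsilon> i * F i z"
    and F1: "\<And>i. Aplus_ext (F i) (\<lambda>_. 1) = 1"
    and disj: "\<And>\<alpha> \<alpha>' \<gamma>. \<alpha> \<noteq> \<alpha>' \<Longrightarrow> G \<alpha> \<gamma> = 0 \<or> G \<alpha>' \<gamma> = 0"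
    and f: "in_Aplus f"
  shows "Aplus_norm (comp_op \<phi> f) = Aplus_norm f"
proof -
  define cF where "cF i = Aplus_coeff (F i)" for i
  have repF: "Aplus_rep (F i) (cF i)" for i unfolding cF_def by (rule coeff_rep[OF inF])
  have asF: "asum (cF i)" for i using rep_asum[OF repF] .
  have sumF: "infsum (cF i) UNIV = 1" for i
    using F1[of i] by (simp add: Aplus_ext_def series_eval_one cF_def)
  have Gu: "G (unitv i) = (\<lambda>\<gamma>. \<epsilon> i * cF i \<gamma>)" for i
  proof -
    have "Aplus_rep (\<phi> i) (\<lambda>\<gamma>. \<epsilon> i * cF i \<gamma>)"
      by (rule rep_cong[OF rep_scale[OF repF]]) (simp add: phiF)
    then show ?thesis unfolding G_def Phi_unit by (rule coeff_eq)
  qed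
  define E where "E \<alpha> = monom \<alpha> \<epsilon>" for \<alpha>
  have nE: "norm (E \<alpha>) = 1" for \<alpha> by (simp add: E_def norm_monom \<epsilon>)
  have Q: "\<exists>p. (\<forall>\<gamma>. nonneg (p \<gamma>)) \<and> asum p \<and> infsum p UNIV = 1 \<and> G \<alpha> = (\<lambda>\<gamma>. E \<alpha> * p \<gamma>)" for \<alpha>
  proof (induction \<alpha> rule: unit_induct)
    case 1
    have "infsum (ind (\<lambda>_. 0)) UNIV = (1::complex)"
      by (subst infsum_single[where a="\<lambda>_. 0"]) (auto simp: ind_def)
    moreover have "\<forall>\<gamma>. nonneg (ind (\<lambda>_. 0) \<gamma>)" by (simp add: nonneg_def ind_def)
    moreover have "G (\<lambda>_. 0) = (\<lambda>\<gamma>. E (\<lambda>_. 0) * ind (\<lambda>_. 0) \<gamma>)" by (simp add: G_zero E_def)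
    ultimately show ?case using asum_ind[of "\<lambda>_. 0"] by blast
  next
    case (2 \<alpha> i)
    then obtain p where p: "\<forall>\<gamma>. nonneg (p \<gamma>)" "asum p" "infsum p UNIV = 1" "G \<alpha> = (\<lambda>\<gamma>. E \<alpha> * p \<gamma>)"
      by blast
    have EE: "E (\<lambda>k. \<alpha> k + unitv i k) = E \<alpha> * \<epsilon> i"
      unfolding E_def monom_add by (simp add: unitv_def monom_unit)
    have "G (\<lambda>k. \<alpha> k + unitv i k) = (\<lambda>\<gamma>. E (\<lambda>k. \<alpha> k + unitv i k) * conv p (cF i) \<gamma>)"
      unfolding G_add p(4) Gu EE by (simp add: fun_eq_iff conv_scale)
    moreover have "\<forall>\<gamma>. nonneg (conv p (cF i) \<gamma>)"
      using p(1) nnF by (auto intro: conv_nonneg simp: cF_def)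
    moreover have "asum (conv p (cF i))" by (rule asum_conv[OF p(2) asF])
    moreover have "infsum (conv p (cF i)) UNIV = 1"
      using conv_sum[OF p(2) asF] p(3) sumF by simp
    ultimately show ?case by blast
  qed
  have normG: "infsum (\<lambda>\<gamma>. norm (G \<alpha> \<gamma>)) UNIV = 1" for \<alpha>
  proof -
    obtain p where p: "\<forall>\<gamma>. nonneg (p \<gamma>)" "asum p" "infsum p UNIV = 1" "G \<alpha> = (\<lambda>\<gamma>. E \<alpha> * p \<gamma>)"
      using Q by blast
    have "infsum (\<lambda>\<gamma>. norm (G \<alpha> \<gamma>)) UNIV = infsum (\<lambda>\<gamma>. Re (p \<gamma>)) UNIV"
    proof (rule infsum_cong)
      fix \<gamma>
      have "norm (p \<gamma>) = Re (p \<gamma>)" using nonneg_iff p(1) by (metis Re_complex_of_real)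
      then show "norm (G \<alpha> \<gamma>) = Re (p \<gamma>)"
        using nE[of \<alpha>] by (simp add: p(4) norm_mult)
    qed
    also have "\<dots> = Re (infsum p UNIV)" by (rule infsum_Re[OF asum_summable[OF p(2)]])
    finally show ?thesis using p(3) by simp
  qed
  obtain c where rc: "Aplus_rep f c" using f by (auto simp: in_Aplus_def)
  have sc: "asum c" using rep_asum[OF rc] .
  define W where "W = (\<lambda>(\<alpha>, \<gamma>). norm (c \<alpha>) * norm (G \<alpha> \<gamma>))"
  define H where "H \<gamma> = infsum (\<lambda>\<alpha>. c \<alpha> * G \<alpha> \<gamma>) UNIV" for \<gamma>
  have Hnorm: "norm (H \<gamma>) = infsum (\<lambda>\<alpha>. W (\<alpha>, \<gamma>)) UNIV"
   and Hsum: "(\<lambda>\<alpha>. c \<alpha> * G \<alpha> \<gamma>) summable_on UNIV" for \<gamma>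
  proof -
    have "(\<exists>\<alpha>0. \<forall>\<alpha>. \<alpha> \<noteq> \<alpha>0 \<longrightarrow> G \<alpha> \<gamma> = 0)"
    proof (cases "\<exists>\<alpha>0. G \<alpha>0 \<gamma> \<noteq> 0")
      case True
      then obtain \<alpha>0 where "G \<alpha>0 \<gamma> \<noteq> 0" by blast
      then show ?thesis using disj by blast
    qed auto
    then obtain \<alpha>0 where z: "\<And>\<alpha>. \<alpha> \<noteq> \<alpha>0 \<Longrightarrow> G \<alpha> \<gamma> = 0" by blast
    have "H \<gamma> = c \<alpha>0 * G \<alpha>0 \<gamma>" unfolding H_def by (rule infsum_single) (simp add: z)
    moreover have "infsum (\<lambda>\<alpha>. W (\<alpha>, \<gamma>)) UNIV = norm (c \<alpha>0) * norm (G \<alpha>0 \<gamma>)"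
      unfolding W_def by (subst infsum_single[where a=\<alpha>0]) (auto simp: z)
    ultimately show "norm (H \<gamma>) = infsum (\<lambda>\<alpha>. W (\<alpha>, \<gamma>)) UNIV" by (simp add: norm_mult)
    show "(\<lambda>\<alpha>. c \<alpha> * G \<alpha> \<gamma>) summable_on UNIV" by (rule summable_single[where a=\<alpha>0]) (simp add: z)
  qed
  have W_nn: "W p \<ge> 0" for p by (auto simp: W_def case_prod_unfold)
  have W_inner: "infsum (\<lambda>\<gamma>. W (\<alpha>, \<gamma>)) UNIV = norm (c \<alpha>)" for \<alpha>
    unfolding W_def using normG[of \<alpha>] by (simp add: infsum_cmult_right')
  have W_sum: "W summable_on UNIV \<times> UNIV"
  proof -
    have "(\<lambda>p. norm (W p)) summable_on Sigma UNIV (\<lambda>_. UNIV)"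
    proof (rule Infinite_Sum.abs_summable_on_Sigma_iff[THEN iffD2], intro conjI ballI)
      fix \<alpha> :: "'n \<Rightarrow> nat"
      show "(\<lambda>\<gamma>. norm (W (\<alpha>, \<gamma>))) summable_on UNIV"
        using summable_on_cmult_right[OF asumG[of \<alpha>], of "norm (c \<alpha>)"] by (simp add: W_def)
    next
      have "(\<lambda>\<alpha>. norm (infsum (\<lambda>\<gamma>. norm (W (\<alpha>, \<gamma>))) UNIV)) = (\<lambda>\<alpha>. norm (c \<alpha>))"
        using W_inner W_nn by (simp add: fun_eq_iff)
      then show "(\<lambda>\<alpha>. norm (infsum (\<lambda>\<gamma>. norm (W (\<alpha>, \<gamma>))) UNIV)) summable_on UNIV"
        using sc by simp
    qed
    then have A: "(\<lambda>p. norm (W p)) summable_on UNIV \<times> UNIV" by simp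
    have eqW: "(\<lambda>p. norm (W p)) = W" using W_nn by (auto simp: fun_eq_iff)
    show ?thesis using A unfolding eqW .
  qed
  have W_sum': "(\<lambda>(\<alpha>, \<gamma>). W (\<alpha>, \<gamma>)) summable_on UNIV \<times> UNIV" using W_sum by simp
  have swap: "infsum (\<lambda>\<alpha>. infsum (\<lambda>\<gamma>. W (\<alpha>, \<gamma>)) UNIV) UNIV = infsum (\<lambda>\<gamma>. infsum (\<lambda>\<alpha>. W (\<alpha>, \<gamma>)) UNIV) UNIV"
    by (rule infsum_swap_banach[of "\<lambda>\<alpha> \<gamma>. W (\<alpha>, \<gamma>)"]) (use W_sum' in simp)
  have sH: "asum H"
  proof -
    have "(\<lambda>(\<gamma>, \<alpha>). W (\<alpha>, \<gamma>)) summable_on UNIV \<times> UNIV"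
      using summable_on_swap[of W UNIV UNIV] W_sum by (simp add: case_prod_unfold)
    then have "(\<lambda>\<gamma>. infsum (\<lambda>\<alpha>. W (\<alpha>, \<gamma>)) UNIV) summable_on UNIV"
      using summable_on_Sigma_banach[of "\<lambda>\<gamma> \<alpha>. W (\<alpha>, \<gamma>)" UNIV "\<lambda>_. UNIV"] by simp
    then show ?thesis using Hnorm by simp
  qed
  have nH: "infsum (\<lambda>\<gamma>. norm (H \<gamma>)) UNIV = infsum (\<lambda>\<alpha>. norm (c \<alpha>)) UNIV"
    using swap W_inner Hnorm by simp
  have ev: "comp_op \<phi> f z = series_eval H z" if z: "z \<in> polydisc" for z
  proof -
    define w where "w = (\<lambda>i. \<phi> i z)"
    have "comp_op \<phi> f z = series_eval c w"
      by (simp add: comp_op_def Aplus_ext_def coeff_eq[OF rc] w_def)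
    also have "\<dots> = infsum (\<lambda>\<alpha>. infsum (\<lambda>\<gamma>. c \<alpha> * G \<alpha> \<gamma> * monom \<gamma> z) UNIV) UNIV"
      unfolding series_eval_def
    proof (rule infsum_cong)
      fix \<alpha>
      have "monom \<alpha> w = series_eval (G \<alpha>) z"
        using repG[of \<alpha>] z by (simp add: Aplus_rep_def Phi_def w_def)
      then show "c \<alpha> * monom \<alpha> w = infsum (\<lambda>\<gamma>. c \<alpha> * G \<alpha> \<gamma> * monom \<gamma> z) UNIV"
        by (simp add: series_eval_def infsum_cmult_right'[symmetric] mult.assoc)
    qed
    also have "\<dots> = infsum (\<lambda>\<gamma>. infsum (\<lambda>\<alpha>. c \<alpha> * G \<alpha> \<gamma> * monom \<gamma> z) UNIV) UNIV"
    proof (rule infsum_swap_banach)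
      have "(\<lambda>p. norm ((\<lambda>(\<alpha>, \<gamma>). c \<alpha> * G \<alpha> \<gamma> * monom \<gamma> z) p)) summable_on UNIV \<times> UNIV"
      proof (rule Infinite_Sum.abs_summable_on_comparison_test'[OF W_sum])
        fix p :: "('n \<Rightarrow> nat) \<times> ('n \<Rightarrow> nat)"
        obtain \<alpha> \<gamma> where pe: "p = (\<alpha>, \<gamma>)" by (cases p)
        have "norm (monom \<gamma> z) \<le> 1" by (rule norm_monom_le[OF polydisc_cpd[OF z]])
        then show "norm ((\<lambda>(\<alpha>, \<gamma>). c \<alpha> * G \<alpha> \<gamma> * monom \<gamma> z) p) \<le> W p"
          by (simp add: pe W_def norm_mult mult_left_le)
      qed
      then show "(\<lambda>(\<alpha>, \<gamma>). c \<alpha> * G \<alpha> \<gamma> * monom \<gamma> z) summable_on UNIV \<times> UNIV"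
        by (rule abs_summable_summable)
    qed
    also have "\<dots> = infsum (\<lambda>\<gamma>. H \<gamma> * monom \<gamma> z) UNIV"
      by (simp add: H_def infsum_cmult_left')
    finally show ?thesis by (simp add: series_eval_def)
  qed
  have "Aplus_rep (comp_op \<phi> f) H"
    unfolding Aplus_rep_def using sH ev by simp
  then have "Aplus_norm (comp_op \<phi> f) = infsum (\<lambda>\<gamma>. norm (H \<gamma>)) UNIV" by (rule norm_eq)
  also have "\<dots> = infsum (\<lambda>\<alpha>. norm (c \<alpha>)) UNIV" by (rule nH)
  also have "\<dots> = Aplus_norm f" by (rule norm_eq[OF rc, symmetric])
  finally show ?thesis .
qed

end


theorem lemma18:
  fixes \<phi> :: "'n::finite \<Rightarrow> ('n \<Rightarrow> complex) \<Rightarrow> complex"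
  assumes analytic: "\<And>i. analytic_polydisc (\<phi> i)"
    and maps_into: "\<And>z i. z \<in> polydisc \<Longrightarrow> norm (\<phi> i z) \<le> 1"
    and bounded_op: "\<And>f. in_Aplus f \<Longrightarrow> in_Aplus (comp_op \<phi> f)"
  shows "(\<forall>f. in_Aplus f \<longrightarrow> Aplus_norm (comp_op \<phi> f) = Aplus_norm f) \<longleftrightarrow>
    ((\<forall>i. \<exists>\<epsilon> F. norm \<epsilon> = 1 \<and> in_Aplus F
          \<and> (\<forall>\<beta>. Im (Aplus_coeff F \<beta>) = 0 \<and> Re (Aplus_coeff F \<beta>) \<ge> 0)
          \<and> (\<forall>z\<in>polydisc. \<phi> i z = \<epsilon> * F z)
          \<and> Aplus_ext F (\<lambda>_. 1) = 1
          \<and> (SUP z\<in>polydisc. norm (F z)) = 1)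
     \<and> (\<forall>\<alpha> \<alpha>'. \<alpha> \<noteq> \<alpha>' \<longrightarrow>
          spectrum_Aplus (\<lambda>z. monom \<alpha> (\<lambda>i. \<phi> i z)) \<inter>
          spectrum_Aplus (\<lambda>z. monom \<alpha>' (\<lambda>i. \<phi> i z)) = {}))"
proof -
  interpret phictx \<phi>
    by unfold_locales (use maps_into bounded_op in auto)
  show ?thesis
  proof
    assume iso: "\<forall>f. in_Aplus f \<longrightarrow> Aplus_norm (comp_op \<phi> f) = Aplus_norm f"
    interpret phiiso \<phi>
      by unfold_locales (use maps_into bounded_op iso in auto)
    show "(\<forall>i. \<exists>\<epsilon> F. norm \<epsilon> = 1 \<and> in_Aplus F
          \<and> (\<forall>\<beta>. Im (Aplus_coeff F \<beta>) = 0 \<and> Re (Aplus_coeff F \<beta>) \<ge> 0)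
          \<and> (\<forall>z\<in>polydisc. \<phi> i z = \<epsilon> * F z)
          \<and> Aplus_ext F (\<lambda>_. 1) = 1
          \<and> (SUP z\<in>polydisc. norm (F z)) = 1)
     \<and> (\<forall>\<alpha> \<alpha>'. \<alpha> \<noteq> \<alpha>' \<longrightarrow>
          spectrum_Aplus (\<lambda>z. monom \<alpha> (\<lambda>i. \<phi> i z)) \<inter>
          spectrum_Aplus (\<lambda>z. monom \<alpha>' (\<lambda>i. \<phi> i z)) = {})"
      using fwd_a fwd_b by blast
  next
    assume H: "(\<forall>i. \<exists>\<epsilon> F. norm \<epsilon> = 1 \<and> in_Aplus F
          \<and> (\<forall>\<beta>. Im (Aplus_coeff F \<beta>) = 0 \<and> Re (Aplus_coeff F \<beta>) \<ge> 0)
          \<and> (\<forall>z\<in>polydisc. \<phi> i z = \<epsilon> * F z)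
          \<and> Aplus_ext F (\<lambda>_. 1) = 1
          \<and> (SUP z\<in>polydisc. norm (F z)) = 1)
     \<and> (\<forall>\<alpha> \<alpha>'. \<alpha> \<noteq> \<alpha>' \<longrightarrow>
          spectrum_Aplus (\<lambda>z. monom \<alpha> (\<lambda>i. \<phi> i z)) \<inter>
          spectrum_Aplus (\<lambda>z. monom \<alpha>' (\<lambda>i. \<phi> i z)) = {})"
    define P where "P i \<epsilon> F \<longleftrightarrow> norm \<epsilon> = 1 \<and> in_Aplus F
          \<and> (\<forall>\<beta>. Im (Aplus_coeff F \<beta>) = 0 \<and> Re (Aplus_coeff F \<beta>) \<ge> 0)
          \<and> (\<forall>z\<in>polydisc. \<phi> i z = \<epsilon> * F z)
          \<and> Aplus_ext F (\<lambda>_. 1) = 1" for i \<epsilon> F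
    have "\<forall>i. \<exists>p. P i (fst p) (snd p)" using H unfolding P_def by fastforce
    then obtain pp where pp: "\<And>i. P i (fst (pp i)) (snd (pp i))" by metis
    define \<epsilon> where "\<epsilon> i = fst (pp i)" for i
    define F where "F i = snd (pp i)" for i
    have PP: "P i (\<epsilon> i) (F i)" for i using pp by (simp add: \<epsilon>_def F_def)
    have disj: "G \<alpha> \<gamma> = 0 \<or> G \<alpha>' \<gamma> = 0" if "\<alpha> \<noteq> \<alpha>'" for \<alpha> \<alpha>' \<gamma>
    proof -
      have "spectrum_Aplus (Phi \<alpha>) \<inter> spectrum_Aplus (Phi \<alpha>') = {}"
        unfolding Phi_def using H that by blast
      then show ?thesis unfolding spectrum_Aplus_def G_def by blast
    qed
    show "\<forall>f. in_Aplus f \<longrightarrow> Aplus_norm (comp_op \<phi> f) = Aplus_norm f"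
    proof (intro allI impI)
      fix f :: "('n \<Rightarrow> complex) \<Rightarrow> complex" assume f: "in_Aplus f"
      show "Aplus_norm (comp_op \<phi> f) = Aplus_norm f"
      proof (rule rev_main[of \<epsilon> F])
        show "norm (\<epsilon> i) = 1" for i using PP[of i] by (simp add: P_def)
        show "in_Aplus (F i)" for i using PP[of i] by (simp add: P_def)
        show "nonneg (Aplus_coeff (F i) \<beta>)" for i \<beta> using PP[of i] by (simp add: P_def nonneg_def)
        show "\<phi> i z = \<epsilon> i * F i z" if "z \<in> polydisc" for i z using PP[of i] that by (simp add: P_def)
        show "Aplus_ext (F i) (\<lambda>_. 1) = 1" for i using PP[of i] by (simp add: P_def)
        show "G \<alpha> \<gamma> = 0 \<or> G \<alpha>' \<gamma> = 0" if "\<alpha> \<noteq> \<alpha>'" for \<alpha> \<alpha>' \<gamma> using disj[OF that] .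
        show "in_Aplus f" by (rule f)
      qed
    qed
  qed
qed


end
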